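(* Let $J_1,J_2$ be cones with joins. Then ${\rm Lin}(J_1,J_2)$, with pointwise operations and the order $\le_L$, is a cone with joins, and for every family $(L_i)_{i\in I}\subset{\rm Lin}(J_1,J_2)$ and $v\in J_1$: $$\Big(\textstyle\sup^L_{i\in I}L_i\Big)(v)=\sup\Big\{\sum_{j=1}^nL_{i_j}(v_j):\ n\ge1,\ i_1,\dots,i_n\in I,\ v_1,\dots,v_n\in J_1,\ \sum_{j=1}^nv_j=v\Big\},$$ $$\Big(\textstyle\inf^L_{i\in I}L_i\Big)(v)=\inf\Big\{\sum_{j=1}^nL_{i_j}(v_j):\ n\ge1,\ i_1,\dots,i_n\in I,\ v_1,\dots,v_n\in J_1,\ \sum_{j=1}^nv_j=v\Big\},$$ where $\sup^L,\inf^L$ are supremum and infimum with respect to $\le_L$, and for $I=\emptyset$ the infimum is the map equal to $0$ at $0$ and to $\infty$ elsewhere (and the supremum is the zero map). In particular $(L_1\vee_LL_2)(v)=\sup_{v_1+v_2=v}L_1(v_1)+L_2(v_2)$ and $(L_1\wedge_LL_2)(v)=\inf_{v_1+v_2=v}L_1(v_1)+L_2(v_2)$. Moreover, $\le_L$ coincides with the pointwise order on ${\rm Lin}(J_1,J_2)$.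
   Context: A prewedge is a set $W$ with a commutative associative addition with neutral element $0$ and a multiplication $[0,\infty)\times W\to W$ such that $\lambda(\eta v)=(\lambda\eta)v$, $0v=0$, $1v=v$, $(\lambda+\eta)v=\lambda v+\eta v$, $\lambda(v+w)=\lambda v+\lambda w$; it carries the preorder $v\le w$ iff $v+z=w$ for some $z$. A wedge is a prewedge in which $\le$ is antisymmetric and $v=\sup_{\eta<1}\eta v$ for every $v$. A cone is a wedge in which every directed subset (every finite subset of it, including the empty one, has an upper bound in it) has a supremum; its maximum is denoted $\infty$. A cone with joins is a cone $J$ in which every subset $A$ has an infimum and $\inf(v+A)=v+\inf A$ for all $v\in J$, $A\subset J$. A map $L:W_1\to W_2$ between prewedges is linear if $L(\lambda_1v_1+\lambda_2v_2)=\lambda_1L(v_1)+\lambda_2L(v_2)$ for all $\lambda_i\ge0$, $v_i\in W_1$. ${\rm Lin}(W_1,W_2)$ is the set of linear maps with pointwise sum and scalar multiplication, and $L_1\le_LL_2$ iff $L_1+M=L_2$ for some $M\in{\rm Lin}(W_1,W_2)$. *)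

theory Defs
  imports Complex_Main
begin

text \<open>A (pre)wedge is represented by an explicit carrier set together with
  its addition, neutral element and scalar multiplication (only scalars
  \<open>\<lambda> \<ge> 0\<close> are meaningful).\<close>

record 'a pwstr =
  wcar :: "'a set"
  wadd :: "'a \<Rightarrow> 'a \<Rightarrow> 'a"
  wzero :: 'a
  wsmul :: "real \<Rightarrow> 'a \<Rightarrow> 'a"

definition prewedge :: "('a, 'm) pwstr_scheme \<Rightarrow> bool" where
  "prewedge W \<longleftrightarrow>
     wzero W \<in> wcar W \<and>
     (\<forall>v\<in>wcar W. \<forall>w\<in>wcar W. wadd W v w \<in> wcar W) \<and>
     (\<forall>l\<ge>0. \<forall>v\<in>wcar W. wsmul W l v \<in> wcar W) \<and>
     (\<forall>v\<in>wcar W. \<forall>w\<in>wcar W. wadd W v w = wadd W w v) \<and>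
     (\<forall>u\<in>wcar W. \<forall>v\<in>wcar W. \<forall>w\<in>wcar W. wadd W (wadd W u v) w = wadd W u (wadd W v w)) \<and>
     (\<forall>v\<in>wcar W. wadd W v (wzero W) = v) \<and>
     (\<forall>l\<ge>0. \<forall>e\<ge>0. \<forall>v\<in>wcar W. wsmul W l (wsmul W e v) = wsmul W (l * e) v) \<and>
     (\<forall>v\<in>wcar W. wsmul W 0 v = wzero W) \<and>
     (\<forall>v\<in>wcar W. wsmul W 1 v = v) \<and>
     (\<forall>l\<ge>0. \<forall>e\<ge>0. \<forall>v\<in>wcar W. wsmul W (l + e) v = wadd W (wsmul W l v) (wsmul W e v)) \<and>
     (\<forall>l\<ge>0. \<forall>v\<in>wcar W. \<forall>w\<in>wcar W. wsmul W l (wadd W v w) = wadd W (wsmul W l v) (wsmul W l w))"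

definition wle :: "('a, 'm) pwstr_scheme \<Rightarrow> 'a \<Rightarrow> 'a \<Rightarrow> bool" where
  "wle W v w \<longleftrightarrow> v \<in> wcar W \<and> w \<in> wcar W \<and> (\<exists>z\<in>wcar W. wadd W v z = w)"

definition is_lub :: "('a, 'm) pwstr_scheme \<Rightarrow> 'a set \<Rightarrow> 'a \<Rightarrow> bool" where
  "is_lub W A s \<longleftrightarrow> s \<in> wcar W \<and> (\<forall>a\<in>A. wle W a s) \<and>
     (\<forall>u\<in>wcar W. (\<forall>a\<in>A. wle W a u) \<longrightarrow> wle W s u)"

definition is_glb :: "('a, 'm) pwstr_scheme \<Rightarrow> 'a set \<Rightarrow> 'a \<Rightarrow> bool" where
  "is_glb W A s \<longleftrightarrow> s \<in> wcar W \<and> (\<forall>a\<in>A. wle W s a) \<and>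
     (\<forall>u\<in>wcar W. (\<forall>a\<in>A. wle W u a) \<longrightarrow> wle W u s)"

definition wedge :: "('a, 'm) pwstr_scheme \<Rightarrow> bool" where
  "wedge W \<longleftrightarrow> prewedge W \<and>
     (\<forall>v\<in>wcar W. \<forall>w\<in>wcar W. wle W v w \<and> wle W w v \<longrightarrow> v = w) \<and>
     (\<forall>v\<in>wcar W. is_lub W {wsmul W e v | e. 0 \<le> e \<and> e < 1} v)"

text \<open>Directed subset: every finite subset (including the empty one) has an
  upper bound inside the set.\<close>
definition directed :: "('a, 'm) pwstr_scheme \<Rightarrow> 'a set \<Rightarrow> bool" where
  "directed W D \<longleftrightarrow> D \<subseteq> wcar W \<and>
     (\<forall>F. finite F \<and> F \<subseteq> D \<longrightarrow> (\<exists>u\<in>D. \<forall>a\<in>F. wle W a u))"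

definition cone :: "('a, 'm) pwstr_scheme \<Rightarrow> bool" where
  "cone W \<longleftrightarrow> wedge W \<and> (\<forall>D. directed W D \<longrightarrow> (\<exists>s. is_lub W D s))"

definition cone_with_joins :: "('a, 'm) pwstr_scheme \<Rightarrow> bool" where
  "cone_with_joins J \<longleftrightarrow> cone J \<and>
     (\<forall>A. A \<subseteq> wcar J \<longrightarrow>
        (\<exists>i. is_glb J A i) \<and>
        (\<forall>v\<in>wcar J. \<forall>i. is_glb J A i \<longrightarrow> is_glb J (wadd J v ` A) (wadd J v i)))"

definition linear_map :: "('a, 'm) pwstr_scheme \<Rightarrow> ('b, 'n) pwstr_scheme \<Rightarrow> ('a \<Rightarrow> 'b) \<Rightarrow> bool" where
  "linear_map W1 W2 L \<longleftrightarrow>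
     (\<forall>v\<in>wcar W1. L v \<in> wcar W2) \<and>
     (\<forall>l1\<ge>0. \<forall>l2\<ge>0. \<forall>v1\<in>wcar W1. \<forall>v2\<in>wcar W1.
        L (wadd W1 (wsmul W1 l1 v1) (wsmul W1 l2 v2)) = wadd W2 (wsmul W2 l1 (L v1)) (wsmul W2 l2 (L v2)))"

text \<open>\<open>Lin(W1,W2)\<close>: linear maps (made extensional, i.e. \<open>undefined\<close> off the
  carrier of \<open>W1\<close>) with pointwise operations.\<close>
definition Lin :: "('a, 'm) pwstr_scheme \<Rightarrow> ('b, 'n) pwstr_scheme \<Rightarrow> ('a \<Rightarrow> 'b) pwstr" where
  "Lin W1 W2 = \<lparr> wcar = {L. linear_map W1 W2 L \<and> (\<forall>v. v \<notin> wcar W1 \<longrightarrow> L v = undefined)},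
     wadd = (\<lambda>L M v. if v \<in> wcar W1 then wadd W2 (L v) (M v) else undefined),
     wzero = (\<lambda>v. if v \<in> wcar W1 then wzero W2 else undefined),
     wsmul = (\<lambda>c L v. if v \<in> wcar W1 then wsmul W2 c (L v) else undefined) \<rparr>"

fun wsum :: "('a, 'm) pwstr_scheme \<Rightarrow> (nat \<Rightarrow> 'a) \<Rightarrow> nat \<Rightarrow> 'a" where
  "wsum W f 0 = wzero W"
| "wsum W f (Suc n) = wadd W (wsum W f n) (f n)"

definition decomp_sums ::
  "('a, 'm) pwstr_scheme \<Rightarrow> ('b, 'n) pwstr_scheme \<Rightarrow> 'i set \<Rightarrow> ('i \<Rightarrow> 'a \<Rightarrow> 'b) \<Rightarrow> 'a \<Rightarrow> 'b set" where
  "decomp_sums J1 J2 I Lf v =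
     {wsum J2 (\<lambda>j. Lf (idx j) (vs j)) n | n idx vs.
        n \<ge> 1 \<and> (\<forall>j<n. idx j \<in> I) \<and> (\<forall>j<n. vs j \<in> wcar J1) \<and> wsum J1 vs n = v}"

end

theory Submission
  imports Defs
begin

locale cwj =
  fixes J :: "('a, 'm) pwstr_scheme"
  assumes cwj: "cone_with_joins J"
begin

lemma cone: "cone J" using cwj unfolding cone_with_joins_def by blast
lemma wedge: "wedge J" using cone unfolding cone_def by blast
lemma pw: "prewedge J" using wedge unfolding wedge_def by blast

lemma zero_in[simp]: "wzero J \<in> wcar J" using pw unfolding prewedge_def by auto
lemma add_in[simp]: "x \<in> wcar J \<Longrightarrow> y \<in> wcar J \<Longrightarrow> wadd J x y \<in> wcar J"
  using pw unfolding prewedge_def by auto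
lemma smul_in[simp]: "0 \<le> l \<Longrightarrow> x \<in> wcar J \<Longrightarrow> wsmul J l x \<in> wcar J"
  using pw unfolding prewedge_def by auto
lemma comm: "x \<in> wcar J \<Longrightarrow> y \<in> wcar J \<Longrightarrow> wadd J x y = wadd J y x"
  using pw unfolding prewedge_def by auto
lemma assoc: "x \<in> wcar J \<Longrightarrow> y \<in> wcar J \<Longrightarrow> z \<in> wcar J \<Longrightarrow> wadd J (wadd J x y) z = wadd J x (wadd J y z)"
  using pw unfolding prewedge_def by auto
lemma add0[simp]: "x \<in> wcar J \<Longrightarrow> wadd J x (wzero J) = x"
  using pw unfolding prewedge_def by auto
lemma add0l[simp]: "x \<in> wcar J \<Longrightarrow> wadd J (wzero J) x = x"
  using comm add0 zero_in by metis
lemma smul_smul: "0 \<le> l \<Longrightarrow> 0 \<le> e \<Longrightarrow> x \<in> wcar J \<Longrightarrow> wsmul J l (wsmul J e x) = wsmul J (l*e) x"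
  using pw unfolding prewedge_def by auto
lemma smul0[simp]: "x \<in> wcar J \<Longrightarrow> wsmul J 0 x = wzero J"
  using pw unfolding prewedge_def by auto
lemma smul1[simp]: "x \<in> wcar J \<Longrightarrow> wsmul J 1 x = x"
  using pw unfolding prewedge_def by auto
lemma smul_distr: "0 \<le> l \<Longrightarrow> 0 \<le> e \<Longrightarrow> x \<in> wcar J \<Longrightarrow> wsmul J (l+e) x = wadd J (wsmul J l x) (wsmul J e x)"
  using pw unfolding prewedge_def by auto
lemma smul_add: "0 \<le> l \<Longrightarrow> x \<in> wcar J \<Longrightarrow> y \<in> wcar J \<Longrightarrow> wsmul J l (wadd J x y) = wadd J (wsmul J l x) (wsmul J l y)"
  using pw unfolding prewedge_def by auto

lemma ac3: "x \<in> wcar J \<Longrightarrow> y \<in> wcar J \<Longrightarrow> z \<in> wcar J \<Longrightarrow> wadd J x (wadd J y z) = wadd J y (wadd J x z)"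
  by (metis assoc comm)

lemma smul_zero[simp]: "0 \<le> l \<Longrightarrow> wsmul J l (wzero J) = wzero J"
  by (metis mult_zero_right order_refl smul0 smul_smul zero_in)

lemma le_in: "wle J x y \<Longrightarrow> x \<in> wcar J \<and> y \<in> wcar J" unfolding wle_def by blast
lemma le_refl[simp]: "x \<in> wcar J \<Longrightarrow> wle J x x" unfolding wle_def by (metis add0 zero_in)
lemma le_trans: "wle J x y \<Longrightarrow> wle J y z \<Longrightarrow> wle J x z"
  unfolding wle_def by (metis add_in assoc)
lemma le_antisym: "wle J x y \<Longrightarrow> wle J y x \<Longrightarrow> x = y"
  using wedge le_in unfolding wedge_def by blast
lemma le_add: "x \<in> wcar J \<Longrightarrow> y \<in> wcar J \<Longrightarrow> wle J x (wadd J x y)" unfolding wle_def by auto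
lemma le_add2: "x \<in> wcar J \<Longrightarrow> y \<in> wcar J \<Longrightarrow> wle J y (wadd J x y)" using comm le_add by metis
lemma zero_le: "x \<in> wcar J \<Longrightarrow> wle J (wzero J) x" using le_add[of "wzero J" x] by simp
lemma add_mono1: "wle J x y \<Longrightarrow> z \<in> wcar J \<Longrightarrow> wle J (wadd J x z) (wadd J y z)"
  unfolding wle_def by (metis add_in assoc comm)
lemma add_mono2: "wle J x y \<Longrightarrow> z \<in> wcar J \<Longrightarrow> wle J (wadd J z x) (wadd J z y)"
  using add_mono1 comm le_in by metis
lemma add_mono: "wle J x y \<Longrightarrow> wle J x' y' \<Longrightarrow> wle J (wadd J x x') (wadd J y y')"
  by (meson add_mono1 add_mono2 le_in le_trans)
lemma smul_mono: "0 \<le> l \<Longrightarrow> wle J x y \<Longrightarrow> wle J (wsmul J l x) (wsmul J l y)"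
  unfolding wle_def by (metis smul_add smul_in)
lemma smul_mono_scal: "0 \<le> l \<Longrightarrow> l \<le> e \<Longrightarrow> x \<in> wcar J \<Longrightarrow> wle J (wsmul J l x) (wsmul J e x)"
proof -
  assume a: "0 \<le> l" "l \<le> e" "x \<in> wcar J"
  have "wsmul J e x = wadd J (wsmul J l x) (wsmul J (e-l) x)" using smul_distr[of l "e-l" x] a by simp
  thus ?thesis using a le_add by simp
qed
lemma sum_zero: "x \<in> wcar J \<Longrightarrow> y \<in> wcar J \<Longrightarrow> wadd J x y = wzero J \<Longrightarrow> x = wzero J"
  by (metis le_add le_antisym zero_le)

lemma smul_inv: "0 < l \<Longrightarrow> x \<in> wcar J \<Longrightarrow> wsmul J (1/l) (wsmul J l x) = x"
  by (simp add: smul_smul)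
lemma smul_le_iff: "0 < l \<Longrightarrow> x \<in> wcar J \<Longrightarrow> y \<in> wcar J \<Longrightarrow> wle J (wsmul J l x) (wsmul J l y) \<longleftrightarrow> wle J x y"
  by (metis less_eq_real_def smul_inv smul_mono zero_le_divide_1_iff)

end


context cwj begin

lemma glb_ex: "A \<subseteq> wcar J \<Longrightarrow> \<exists>i. is_glb J A i" using cwj unfolding cone_with_joins_def by blast
lemma glb_shift: "A \<subseteq> wcar J \<Longrightarrow> v \<in> wcar J \<Longrightarrow> is_glb J A i \<Longrightarrow> is_glb J (wadd J v ` A) (wadd J v i)"
  using cwj unfolding cone_with_joins_def by blast

lemma glb_unique: "is_glb J A i \<Longrightarrow> is_glb J A i' \<Longrightarrow> i = i'"
  unfolding is_glb_def by (meson le_antisym)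
lemma lub_unique: "is_lub J A i \<Longrightarrow> is_lub J A i' \<Longrightarrow> i = i'"
  unfolding is_lub_def by (meson le_antisym)

definition ginf where "ginf A = (SOME i. is_glb J A i)"

lemma ginf: "A \<subseteq> wcar J \<Longrightarrow> is_glb J A (ginf A)"
  unfolding ginf_def by (rule someI_ex, rule glb_ex)
lemma ginf_eq: "is_glb J A i \<Longrightarrow> ginf A = i"
  using glb_unique unfolding ginf_def by (metis someI_ex)
lemma ginf_in: "A \<subseteq> wcar J \<Longrightarrow> ginf A \<in> wcar J" using ginf unfolding is_glb_def by simp
lemma ginf_le: "A \<subseteq> wcar J \<Longrightarrow> a \<in> A \<Longrightarrow> wle J (ginf A) a" using ginf unfolding is_glb_def by simp
lemma le_ginf: "A \<subseteq> wcar J \<Longrightarrow> x \<in> wcar J \<Longrightarrow> (\<And>a. a \<in> A \<Longrightarrow> wle J x a) \<Longrightarrow> wle J x (ginf A)"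
  using ginf unfolding is_glb_def by simp
lemma ginf_shift: "A \<subseteq> wcar J \<Longrightarrow> v \<in> wcar J \<Longrightarrow> ginf (wadd J v ` A) = wadd J v (ginf A)"
  by (metis glb_shift ginf ginf_eq)

lemma ginf_mono: "A \<subseteq> wcar J \<Longrightarrow> B \<subseteq> wcar J \<Longrightarrow> (\<And>b. b \<in> B \<Longrightarrow> \<exists>a\<in>A. wle J a b) \<Longrightarrow> wle J (ginf A) (ginf B)"
  by (rule le_ginf, assumption, rule ginf_in, assumption) (meson ginf_le le_trans)

lemma fin_ub: "finite F \<Longrightarrow> F \<subseteq> wcar J \<Longrightarrow> \<exists>u\<in>wcar J. \<forall>a\<in>F. wle J a u"
proof (induction F rule: finite_induct)
  case empty
  then show ?case using zero_in by blast
next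
  case (insert x F)
  then obtain u where u: "u \<in> wcar J" "\<forall>a\<in>F. wle J a u" by auto
  have x: "x \<in> wcar J" using insert by auto
  have "\<forall>a\<in>insert x F. wle J a (wadd J u x)"
    using u x le_add le_add2 le_trans by blast
  then show ?case using u x by (meson add_in)
qed

lemma car_directed: "directed J (wcar J)" unfolding directed_def using fin_ub by blast

definition topJ where "topJ = (SOME s. is_lub J (wcar J) s)"
lemma top_lub: "is_lub J (wcar J) topJ"
  unfolding topJ_def using cone car_directed unfolding cone_def by (metis someI_ex)
lemma top_in[simp]: "topJ \<in> wcar J" using top_lub unfolding is_lub_def by simp
lemma le_top: "x \<in> wcar J \<Longrightarrow> wle J x topJ" using top_lub unfolding is_lub_def by simp
lemma top_eq: "x \<in> wcar J \<Longrightarrow> wle J topJ x \<Longrightarrow> x = topJ" using le_antisym le_top by blast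

definition gsup where "gsup A = ginf {u \<in> wcar J. \<forall>a\<in>A. wle J a u}"

lemma gsup: "A \<subseteq> wcar J \<Longrightarrow> is_lub J A (gsup A)"
proof -
  assume A: "A \<subseteq> wcar J"
  let ?U = "{u \<in> wcar J. \<forall>a\<in>A. wle J a u}"
  have U: "?U \<subseteq> wcar J" by blast
  show ?thesis unfolding is_lub_def gsup_def
    using ginf_in[OF U] ginf_le[OF U] le_ginf[OF U] A by blast
qed
lemma gsup_eq: "is_lub J A s \<Longrightarrow> A \<subseteq> wcar J \<Longrightarrow> gsup A = s"
  using gsup lub_unique by metis
lemma gsup_in: "A \<subseteq> wcar J \<Longrightarrow> gsup A \<in> wcar J" using gsup unfolding is_lub_def by simp
lemma le_gsup: "A \<subseteq> wcar J \<Longrightarrow> a \<in> A \<Longrightarrow> wle J a (gsup A)" using gsup unfolding is_lub_def by simp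
lemma gsup_le: "A \<subseteq> wcar J \<Longrightarrow> x \<in> wcar J \<Longrightarrow> (\<And>a. a \<in> A \<Longrightarrow> wle J a x) \<Longrightarrow> wle J (gsup A) x"
  using gsup unfolding is_lub_def by simp

lemma smul_ginf: "0 < l \<Longrightarrow> A \<subseteq> wcar J \<Longrightarrow> wsmul J l (ginf A) = ginf (wsmul J l ` A)"
proof -
  assume l: "0 < l" and A: "A \<subseteq> wcar J"
  have lA: "wsmul J l ` A \<subseteq> wcar J" using A l by auto
  have 1: "wle J (wsmul J l (ginf A)) (ginf (wsmul J l ` A))"
    using l A lA by (intro le_ginf) (auto intro: smul_mono ginf_le ginf_in smul_in)
  have "wle J (wsmul J (1/l) (ginf (wsmul J l ` A))) (ginf A)"
    using l A lA
  proof (intro le_ginf)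
    fix a assume a: "a \<in> A"
    have "wle J (wsmul J (1/l) (ginf (wsmul J l ` A))) (wsmul J (1/l) (wsmul J l a))"
      using l a lA by (intro smul_mono ginf_le) auto
    thus "wle J (wsmul J (1/l) (ginf (wsmul J l ` A))) a" using smul_inv l a A by auto
  qed (use l lA ginf_in in auto)
  hence "wle J (wsmul J l (wsmul J (1/l) (ginf (wsmul J l ` A)))) (wsmul J l (ginf A))"
    using l by (intro smul_mono) auto
  moreover have "wsmul J l (wsmul J (1/l) (ginf (wsmul J l ` A))) = ginf (wsmul J l ` A)"
    using l ginf_in[OF lA] by (simp add: smul_smul)
  ultimately have "wle J (ginf (wsmul J l ` A)) (wsmul J l (ginf A))" by simp
  thus ?thesis using 1 le_antisym by blast
qed

end


context cwj begin

lemmas le_trans_rule[trans] = le_trans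

lemma wedge_lub: "p \<in> wcar J \<Longrightarrow> is_lub J {wsmul J e p | e. 0 \<le> e \<and> e < 1} p"
proof -
  have "\<forall>v\<in>wcar J. is_lub J {wsmul J e v | e. 0 \<le> e \<and> e < 1} v"
    using wedge unfolding wedge_def by (rule conjunct2[OF conjunct2])
  thus "p \<in> wcar J \<Longrightarrow> ?thesis" by simp
qed

lemma is_lub_le: "is_lub J A s \<Longrightarrow> x \<in> wcar J \<Longrightarrow> (\<forall>a\<in>A. wle J a x) \<Longrightarrow> wle J s x"
  unfolding is_lub_def by simp

lemma right_cont: "p \<in> wcar J \<Longrightarrow> ginf {wsmul J m p | m. 1 < m} = p"
proof -
  assume p: "p \<in> wcar J"
  define X where "X = {wsmul J m p | m. 1 < m}"
  have X: "X \<subseteq> wcar J" using p unfolding X_def by auto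
  have 1: "wle J p (ginf X)"
  proof (rule le_ginf[OF X p])
    fix a assume "a \<in> X"
    then obtain m where "1 < m" "a = wsmul J m p" unfolding X_def by auto
    thus "wle J p a" using smul_mono_scal[of 1 m p] p by simp
  qed
  let ?P = "ginf X"
  have P: "?P \<in> wcar J" using ginf_in[OF X] .
  have lub: "is_lub J {wsmul J e ?P | e. 0 \<le> e \<and> e < 1} ?P" using wedge_lub P by simp
  have "wle J ?P p"
  proof -
    have "\<forall>a\<in>{wsmul J e ?P | e. 0 \<le> e \<and> e < 1}. wle J a p"
    proof
      fix a assume "a \<in> {wsmul J e ?P | e. 0 \<le> e \<and> e < 1}"
      then obtain e where e: "0 \<le> e" "e < 1" "a = wsmul J e ?P" by auto
      show "wle J a p"
      proof (cases "e = 0")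
        case True thus ?thesis using e p P zero_le by simp
      next
        case False
        hence e0: "0 < e" using e by simp
        have "1 < 1/e" using e0 e by simp
        hence "wsmul J (1/e) p \<in> X" unfolding X_def by blast
        hence "wle J ?P (wsmul J (1/e) p)" using ginf_le[OF X] by blast
        hence "wle J (wsmul J e ?P) (wsmul J e (wsmul J (1/e) p))" using e0 smul_mono by simp
        thus ?thesis using e e0 p by (simp add: smul_smul)
      qed
    qed
    thus ?thesis using is_lub_le[OF lub p] by simp
  qed
  thus ?thesis using 1 le_antisym unfolding X_def by blast
qed

definition Ab where "Ab p = ginf {wsmul J l p | l. 0 < l}"

lemma Ab_set: "p \<in> wcar J \<Longrightarrow> {wsmul J l p | l. 0 < l} \<subseteq> wcar J" by auto
lemma Ab_in[simp]: "p \<in> wcar J \<Longrightarrow> Ab p \<in> wcar J" unfolding Ab_def using ginf_in Ab_set by blast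

lemma Ab_absorb: "p \<in> wcar J \<Longrightarrow> wadd J p (Ab p) = p"
proof -
  assume p: "p \<in> wcar J"
  have "wadd J p (Ab p) = ginf (wadd J p ` {wsmul J l p | l. 0 < l})"
    unfolding Ab_def using ginf_shift[OF Ab_set[OF p] p] by simp
  also have "wadd J p ` {wsmul J l p | l. 0 < l} = {wsmul J m p | m. 1 < m}"
  proof -
    have eq: "wadd J p (wsmul J l p) = wsmul J (1+l) p" if "0 < l" for l
      using smul_distr[of 1 l p] that p by simp
    show ?thesis
    proof (intro set_eqI iffI)
      fix x assume "x \<in> wadd J p ` {wsmul J l p | l. 0 < l}"
      then obtain l where l: "0 < l" "x = wadd J p (wsmul J l p)" by blast
      hence "x = wsmul J (1+l) p" "1 < 1 + l" using eq by auto
      thus "x \<in> {wsmul J m p | m. 1 < m}" by blast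
    next
      fix x assume "x \<in> {wsmul J m p | m. 1 < m}"
      then obtain m where m: "1 < m" "x = wsmul J m p" by blast
      hence "x = wadd J p (wsmul J (m-1) p)" using eq[of "m-1"] by simp
      moreover have "wsmul J (m-1) p \<in> {wsmul J l p | l. 0 < l}" using m by auto
      ultimately show "x \<in> wadd J p ` {wsmul J l p | l. 0 < l}" by blast
    qed
  qed
  finally show ?thesis using right_cont p by simp
qed

lemma smul_nat_absorb: "p \<in> wcar J \<Longrightarrow> r \<in> wcar J \<Longrightarrow> wadd J p r = p \<Longrightarrow> wadd J p (wsmul J (real n) r) = p"
proof (induction n)
  case 0 thus ?case by simp
next
  case (Suc n)
  have eq: "wsmul J (real (Suc n)) r = wadd J (wsmul J (real n) r) r"
    using smul_distr[of "real n" 1 r] Suc.prems by (simp add: add.commute)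
  have "wadd J p (wsmul J (real (Suc n)) r) = wadd J (wadd J p (wsmul J (real n) r)) r"
    unfolding eq using Suc.prems by (simp add: assoc)
  thus ?case using Suc by simp
qed

lemma Ab_max: "p \<in> wcar J \<Longrightarrow> r \<in> wcar J \<Longrightarrow> wadd J p r = p \<Longrightarrow> wle J r (Ab p)"
proof -
  assume p: "p \<in> wcar J" and r: "r \<in> wcar J" and a: "wadd J p r = p"
  show ?thesis unfolding Ab_def
  proof (rule le_ginf[OF Ab_set[OF p] r])
    fix b assume "b \<in> {wsmul J l p | l. 0 < l}"
    then obtain l where l: "0 < l" "b = wsmul J l p" by auto
    obtain n :: nat where n: "1 / l < real n" using reals_Archimedean2 by blast
    have n0: "0 < real n" using n l by (smt (verit) divide_pos_pos)
    have nl: "1 / real n \<le> l" using n l n0 by (simp add: field_simps)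
    have "wle J (wsmul J (real n) r) p"
      using smul_nat_absorb[OF p r a, of n] le_add2[of p "wsmul J (real n) r"] p r by simp
    hence "wle J (wsmul J (1 / real n) (wsmul J (real n) r)) (wsmul J (1 / real n) p)"
      using smul_mono n0 by simp
    hence "wle J r (wsmul J (1 / real n) p)" using smul_inv[OF n0 r] by simp
    also have "wle J (wsmul J (1 / real n) p) (wsmul J l p)" using smul_mono_scal nl n0 p by simp
    finally show "wle J r b" using l by simp
  qed
qed

lemma Ab_scal: "0 < l \<Longrightarrow> p \<in> wcar J \<Longrightarrow> wsmul J l (Ab p) = Ab p"
proof -
  assume l: "0 < l" and p: "p \<in> wcar J"
  have "wsmul J l (Ab p) = ginf (wsmul J l ` {wsmul J m p | m. 0 < m})"
    unfolding Ab_def using smul_ginf[OF l Ab_set[OF p]] .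
  also have "wsmul J l ` {wsmul J m p | m. 0 < m} = {wsmul J m p | m. 0 < m}"
  proof (intro set_eqI iffI)
    fix x assume "x \<in> wsmul J l ` {wsmul J m p | m. 0 < m}"
    then obtain m where m: "0 < m" "x = wsmul J l (wsmul J m p)" by blast
    hence "x = wsmul J (l*m) p" "0 < l*m" using l p by (auto simp: smul_smul)
    thus "x \<in> {wsmul J m p | m. 0 < m}" by blast
  next
    fix x assume "x \<in> {wsmul J m p | m. 0 < m}"
    then obtain m where m: "0 < m" "x = wsmul J m p" by blast
    hence "x = wsmul J l (wsmul J (m/l) p)" using l p by (simp add: smul_smul)
    moreover have "wsmul J (m/l) p \<in> {wsmul J m p | m. 0 < m}" using m l by auto
    ultimately show "x \<in> wsmul J l ` {wsmul J m p | m. 0 < m}" by blast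
  qed
  finally show ?thesis unfolding Ab_def .
qed

lemma Ab_le: "t \<in> wcar J \<Longrightarrow> wle J (Ab t) x \<Longrightarrow> wle J (Ab t) (Ab x)"
proof -
  assume t: "t \<in> wcar J" and a: "wle J (Ab t) x"
  have x: "x \<in> wcar J" using a le_in by blast
  show ?thesis unfolding Ab_def[of x]
  proof (rule le_ginf[OF Ab_set[OF x] Ab_in[OF t]])
    fix b assume "b \<in> {wsmul J l x | l. 0 < l}"
    then obtain l where l: "0 < l" "b = wsmul J l x" by auto
    have "wle J (wsmul J l (Ab t)) (wsmul J l x)" using smul_mono a l by simp
    thus "wle J (Ab t) b" using Ab_scal[OF l(1) t] l by simp
  qed
qed

lemma Ab_lb: "p \<in> wcar J \<Longrightarrow> 0 < l \<Longrightarrow> wle J (Ab p) (wsmul J l p)"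
  unfolding Ab_def[of p] by (rule ginf_le[OF Ab_set]) auto

lemma Ab_glb: "p \<in> wcar J \<Longrightarrow> x \<in> wcar J \<Longrightarrow> (\<And>l. 0 < l \<Longrightarrow> wle J x (wsmul J l p)) \<Longrightarrow> wle J x (Ab p)"
  unfolding Ab_def[of p] by (rule le_ginf[OF Ab_set]) auto

lemma Ab_shift: "p \<in> wcar J \<Longrightarrow> y \<in> wcar J \<Longrightarrow>
   (\<And>l. 0 < l \<Longrightarrow> wle J x (wadd J y (wsmul J l p))) \<Longrightarrow> x \<in> wcar J \<Longrightarrow> wle J x (wadd J y (Ab p))"
proof -
  assume p: "p \<in> wcar J" and y: "y \<in> wcar J" and h: "\<And>l. 0 < l \<Longrightarrow> wle J x (wadd J y (wsmul J l p))"
    and x: "x \<in> wcar J"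
  have "wadd J y (Ab p) = ginf (wadd J y ` {wsmul J l p | l. 0 < l})"
    unfolding Ab_def[of p] using ginf_shift[OF Ab_set[OF p] y] by simp
  moreover have "wle J x (ginf (wadd J y ` {wsmul J l p | l. 0 < l}))"
  proof (rule le_ginf)
    show "wadd J y ` {wsmul J l p | l. 0 < l} \<subseteq> wcar J" using p y by auto
  next
    fix a assume "a \<in> wadd J y ` {wsmul J l p | l. 0 < l}"
    then obtain l where "0 < l" "a = wadd J y (wsmul J l p)" by blast
    thus "wle J x a" using h by simp
  qed (rule x)
  ultimately show ?thesis by simp
qed

lemma Ab_sub: "p \<in> wcar J \<Longrightarrow> q \<in> wcar J \<Longrightarrow> wle J (Ab (wadd J p q)) (wadd J (Ab p) (Ab q))"
proof -
  assume p: "p \<in> wcar J" and q: "q \<in> wcar J"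
  have pq: "wadd J p q \<in> wcar J" using p q by simp
  have key: "wle J (Ab (wadd J p q)) (wadd J (wsmul J l p) (wsmul J m q))" if "0 < l" "0 < m" for l m
  proof -
    define n where "n = min l m"
    have n: "0 < n" "n \<le> l" "n \<le> m" using that unfolding n_def by auto
    have "wle J (Ab (wadd J p q)) (wsmul J n (wadd J p q))" using Ab_lb[OF pq n(1)] .
    also have "wsmul J n (wadd J p q) = wadd J (wsmul J n p) (wsmul J n q)" using smul_add n p q by simp
    also have "wle J \<dots> (wadd J (wsmul J l p) (wsmul J m q))"
      using n p q by (intro add_mono smul_mono_scal) auto
    finally show ?thesis .
  qed
  have 1: "wle J (Ab (wadd J p q)) (wadd J (wsmul J m q) (Ab p))" if m: "0 < m" for m
    using p q m key comm by (intro Ab_shift) auto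
  have "wle J (Ab (wadd J p q)) (wadd J (Ab p) (Ab q))"
  proof (rule Ab_shift[OF q Ab_in[OF p]])
    fix m :: real assume "0 < m"
    thus "wle J (Ab (wadd J p q)) (wadd J (Ab p) (wsmul J m q))" using 1[of m] comm p q by simp
  qed (use pq in simp)
  thus ?thesis .
qed

lemma absorb_mono: "wle J t t' \<Longrightarrow> r \<in> wcar J \<Longrightarrow> wadd J t r = t \<Longrightarrow> wadd J t' r = t'"
proof -
  assume a: "wle J t t'" and r: "r \<in> wcar J" and e: "wadd J t r = t"
  obtain d where d: "d \<in> wcar J" "wadd J t d = t'" using a unfolding wle_def by blast
  have t: "t \<in> wcar J" using a le_in by blast
  have "wadd J t' r = wadd J (wadd J t d) r" using d by simp
  also have "\<dots> = wadd J t (wadd J d r)" using assoc[OF t d(1) r] by simp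
  also have "\<dots> = wadd J t (wadd J r d)" using comm[OF d(1) r] by simp
  also have "\<dots> = wadd J (wadd J t r) d" using assoc[OF t r d(1)] by simp
  finally have "wadd J t' r = wadd J (wadd J t r) d" .
  thus ?thesis using e d by simp
qed

lemma glb2: "wle J x y \<Longrightarrow> ginf {x, y} = x"
  by (rule ginf_eq) (auto simp: is_glb_def le_in)

lemma quasi_cancel:
  assumes c: "c \<in> wcar J" and x: "x \<in> wcar J" and y: "y \<in> wcar J"
    and le: "wle J (wadd J c x) (wadd J c y)"
  shows "wle J x (wadd J y (Ab (wadd J c y)))"
proof -
  define m where "m = ginf {x, y}"
  have xy: "{x, y} \<subseteq> wcar J" using x y by auto
  have m: "m \<in> wcar J" "wle J m x" "wle J m y" unfolding m_def using ginf_in[OF xy] ginf_le[OF xy] by auto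
  have "wadd J c m = ginf (wadd J c ` {x, y})" unfolding m_def using ginf_shift[OF xy c] by simp
  also have "\<dots> = wadd J c x" using glb2[OF le] by simp
  finally have cm: "wadd J c m = wadd J c x" .
  obtain r where r: "r \<in> wcar J" "wadd J m r = x" using m(2) unfolding wle_def by blast
  have "wadd J (wadd J c m) r = wadd J c m" using assoc[OF c m(1) r(1)] r(2) cm by simp
  hence "wadd J (wadd J c y) r = wadd J c y"
    using absorb_mono[OF add_mono2[OF m(3) c] r(1)] by simp
  hence rA: "wle J r (Ab (wadd J c y))" using Ab_max c y r by simp
  have "wle J x (wadd J y r)" using r add_mono1[OF m(3) r(1)] by simp
  also have "wle J (wadd J y r) (wadd J y (Ab (wadd J c y)))" using add_mono2[OF rA y] .
  finally show ?thesis .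
qed

lemma sup_dist:
  assumes Z: "Z \<subseteq> wcar J" "Z \<noteq> {}" and a: "a \<in> wcar J"
  shows "wadd J a (gsup Z) = gsup (wadd J a ` Z)"
proof -
  have aZ: "wadd J a ` Z \<subseteq> wcar J" using Z a by auto
  define t where "t = gsup (wadd J a ` Z)"
  have t: "t \<in> wcar J" unfolding t_def using gsup_in[OF aZ] .
  obtain z0 where z0: "z0 \<in> Z" using Z by auto
  have "wle J a t" using le_add[of a z0] le_gsup[OF aZ, of "wadd J a z0"] z0 Z a le_trans
    unfolding t_def by blast
  then obtain d where d: "d \<in> wcar J" "wadd J a d = t" unfolding wle_def by blast
  have "wle J z (wadd J d (Ab t))" if z: "z \<in> Z" for z
  proof -
    have "wle J (wadd J a z) (wadd J a d)" using d le_gsup[OF aZ] z unfolding t_def by auto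
    thus ?thesis using quasi_cancel[OF a _ d(1)] z Z d by auto
  qed
  hence "wle J (gsup Z) (wadd J d (Ab t))" using Z d t by (intro gsup_le) auto
  hence "wle J (wadd J a (gsup Z)) (wadd J a (wadd J d (Ab t)))" using add_mono2 a by blast
  also have "wadd J a (wadd J d (Ab t)) = t" using d a t by (simp add: assoc[symmetric] Ab_absorb)
  finally have 1: "wle J (wadd J a (gsup Z)) t" .
  have "wle J t (wadd J a (gsup Z))" unfolding t_def
    using aZ Z a gsup_in[OF Z(1)] by (intro gsup_le) (auto intro: add_mono2 le_gsup)
  thus ?thesis using 1 le_antisym unfolding t_def by blast
qed

lemma rdp2:
  assumes le: "wle J x (wadd J u1 u2)" and u1: "u1 \<in> wcar J" and u2: "u2 \<in> wcar J"
  shows "\<exists>x1 x2. x1 \<in> wcar J \<and> x2 \<in> wcar J \<and> wadd J x1 x2 = x \<and> wle J x1 u1 \<and> wle J x2 u2"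
proof -
  have x: "x \<in> wcar J" using le le_in by blast
  define x1 where "x1 = ginf {x, u1}"
  have xu: "{x, u1} \<subseteq> wcar J" using x u1 by auto
  have x1: "x1 \<in> wcar J" "wle J x1 x" "wle J x1 u1" unfolding x1_def using ginf_in[OF xu] ginf_le[OF xu] by auto
  have "wadd J u2 x1 = ginf (wadd J u2 ` {x, u1})" unfolding x1_def using ginf_shift[OF xu u2] by simp
  moreover have "wle J x (ginf (wadd J u2 ` {x, u1}))"
    using xu u2 x le by (intro le_ginf) (auto intro: le_add2 simp: comm)
  ultimately have xle: "wle J x (wadd J x1 u2)" using comm x1 u2 by simp
  define S where "S = {z \<in> wcar J. wle J x (wadd J x1 z)}"
  define x2 where "x2 = ginf S"
  have S: "S \<subseteq> wcar J" unfolding S_def by auto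
  have x2: "x2 \<in> wcar J" unfolding x2_def using ginf_in[OF S] .
  have "wle J x2 u2" unfolding x2_def using ginf_le[OF S] xle u2 S_def by auto
  obtain d where d: "d \<in> wcar J" "wadd J x1 d = x" using x1(2) unfolding wle_def by blast
  have "wadd J x1 x2 = ginf (wadd J x1 ` S)" unfolding x2_def using ginf_shift[OF S x1(1)] by simp
  moreover have "wle J x (ginf (wadd J x1 ` S))" using S x x1 by (intro le_ginf) (auto simp: S_def)
  moreover have "wle J (ginf (wadd J x1 ` S)) x"
  proof -
    have dS: "d \<in> S" using d x unfolding S_def by auto
    have "wle J (ginf (wadd J x1 ` S)) (wadd J x1 d)" by (rule ginf_le) (use S x1 dS in auto)
    thus ?thesis using d by simp
  qed
  ultimately have "wadd J x1 x2 = x" using le_antisym by metis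
  thus ?thesis using x1 x2 \<open>wle J x2 u2\<close> by blast
qed

lemma maxc:
  assumes a: "wle J a p"
  shows "\<exists>b. b \<in> wcar J \<and> wadd J a b = p \<and> (\<forall>z\<in>wcar J. wle J (wadd J a z) p \<longrightarrow> wle J z b)"
proof -
  have ap: "a \<in> wcar J" "p \<in> wcar J" using a le_in by auto
  define Z where "Z = {z \<in> wcar J. wle J (wadd J a z) p}"
  have Z: "Z \<subseteq> wcar J" unfolding Z_def by auto
  obtain d where d: "d \<in> wcar J" "wadd J a d = p" using a unfolding wle_def by blast
  have dZ: "d \<in> Z" using d ap unfolding Z_def by auto
  define b where "b = gsup Z"
  have b: "b \<in> wcar J" unfolding b_def using gsup_in[OF Z] .
  have "wadd J a b = gsup (wadd J a ` Z)" unfolding b_def using sup_dist[OF Z _ ap(1)] dZ by blast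
  moreover have "wle J (gsup (wadd J a ` Z)) p" using Z ap by (intro gsup_le) (auto simp: Z_def)
  moreover have "wle J p (wadd J a b)" using d add_mono2[OF le_gsup[OF Z dZ] ap(1)] unfolding b_def by simp
  ultimately have "wadd J a b = p" using le_antisym by metis
  moreover have "\<forall>z\<in>wcar J. wle J (wadd J a z) p \<longrightarrow> wle J z b"
    unfolding b_def using le_gsup[OF Z] Z_def by auto
  ultimately show ?thesis using b by blast
qed

lemma walpha:
  assumes a1: "wle J a1 p" and a2: "wle J a2 q"
    and b1: "b1 \<in> wcar J" "wadd J a1 b1 = p" "\<forall>z\<in>wcar J. wle J (wadd J a1 z) p \<longrightarrow> wle J z b1"
    and b2: "b2 \<in> wcar J" "wadd J a2 b2 = q" "\<forall>z\<in>wcar J. wle J (wadd J a2 z) q \<longrightarrow> wle J z b2"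
    and w: "w \<in> wcar J" and le: "wle J (wadd J (wadd J a1 a2) w) (wadd J p q)"
  shows "wle J w (wadd J b1 b2)"
proof -
  have in1: "a1 \<in> wcar J" "p \<in> wcar J" "a2 \<in> wcar J" "q \<in> wcar J" using a1 a2 le_in by auto
  let ?c = "wadd J a1 a2" and ?B = "wadd J b1 b2"
  have cB: "wadd J ?c ?B = wadd J p q"
    using in1 b1 b2 by (metis assoc ac3 add_in)
  have "wle J w (wadd J ?B (Ab (wadd J p q)))"
    using quasi_cancel[of ?c w ?B] le cB in1 b1 b2 w by simp
  also have "wle J (wadd J ?B (Ab (wadd J p q))) (wadd J ?B (wadd J (Ab p) (Ab q)))"
    using Ab_sub in1 add_mono2 b1 b2 by simp
  also have "wle J (wadd J ?B (wadd J (Ab p) (Ab q))) (wadd J ?B (wadd J (Ab b1) (Ab b2)))"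
  proof -
    have "wle J (wadd J a1 (Ab p)) p" using Ab_absorb in1 add_mono1[OF a1, of "Ab p"] by simp
    hence "wle J (Ab p) b1" using b1 in1 by simp
    hence 1: "wle J (Ab p) (Ab b1)" using Ab_le in1 by simp
    have "wle J (wadd J a2 (Ab q)) q" using Ab_absorb in1 add_mono1[OF a2, of "Ab q"] by simp
    hence "wle J (Ab q) b2" using b2 in1 by simp
    hence 2: "wle J (Ab q) (Ab b2)" using Ab_le in1 by simp
    show ?thesis using add_mono[OF 1 2] b1 b2 add_mono2 by simp
  qed
  also have "wadd J ?B (wadd J (Ab b1) (Ab b2)) = ?B"
  proof -
    have "wadd J ?B (wadd J (Ab b1) (Ab b2)) = wadd J (wadd J b1 (Ab b1)) (wadd J b2 (Ab b2))"
      using b1 b2 by (metis Ab_in assoc ac3 add_in)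
    thus ?thesis using Ab_absorb b1 b2 by simp
  qed
  finally show ?thesis .
qed

lemma w22:
  assumes le: "wle J (wadd J r1 r2) (wadd J p q)" and r: "r1 \<in> wcar J" "r2 \<in> wcar J"
    and pq: "p \<in> wcar J" "q \<in> wcar J"
  shows "\<exists>a1 a2 b1 b2. a1 \<in> wcar J \<and> a2 \<in> wcar J \<and> b1 \<in> wcar J \<and> b2 \<in> wcar J \<and>
     wadd J a1 b1 = p \<and> wadd J a2 b2 = q \<and> wle J r1 (wadd J a1 a2) \<and> wle J r2 (wadd J b1 b2)"
proof -
  have "wle J r1 (wadd J p q)" using le_trans[OF le_add le] r by blast
  then obtain a1 a2 where a: "a1 \<in> wcar J" "a2 \<in> wcar J" "wadd J a1 a2 = r1" "wle J a1 p" "wle J a2 q"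
    using rdp2 pq by blast
  obtain b1 where b1: "b1 \<in> wcar J" "wadd J a1 b1 = p" "\<forall>z\<in>wcar J. wle J (wadd J a1 z) p \<longrightarrow> wle J z b1"
    using maxc[OF a(4)] by blast
  obtain b2 where b2: "b2 \<in> wcar J" "wadd J a2 b2 = q" "\<forall>z\<in>wcar J. wle J (wadd J a2 z) q \<longrightarrow> wle J z b2"
    using maxc[OF a(5)] by blast
  have "wle J r2 (wadd J b1 b2)" using walpha[OF a(4,5) b1 b2 r(2)] le a by simp
  thus ?thesis
    by (intro exI[of _ a1] exI[of _ a2] exI[of _ b1] exI[of _ b2]) (use a b1 b2 r in auto)
qed

end


context cwj begin

lemma wsum_in[simp]: "(\<And>j. j < n \<Longrightarrow> f j \<in> wcar J) \<Longrightarrow> wsum J f n \<in> wcar J"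
  by (induction n) auto

lemma wsum_cong: "(\<And>j. j < n \<Longrightarrow> f j = g j) \<Longrightarrow> wsum J f n = wsum J g n"
  by (induction n) auto

lemma wsum_add: "(\<And>j. j < n \<Longrightarrow> f j \<in> wcar J) \<Longrightarrow> (\<And>j. j < n \<Longrightarrow> g j \<in> wcar J) \<Longrightarrow>
   wsum J (\<lambda>j. wadd J (f j) (g j)) n = wadd J (wsum J f n) (wsum J g n)"
proof (induction n)
  case 0 thus ?case by simp
next
  case (Suc n)
  have f: "wsum J f n \<in> wcar J" "f n \<in> wcar J" and g: "wsum J g n \<in> wcar J" "g n \<in> wcar J"
    using Suc.prems by auto
  have "wsum J (\<lambda>j. wadd J (f j) (g j)) (Suc n) = wadd J (wadd J (wsum J f n) (wsum J g n)) (wadd J (f n) (g n))"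
    using Suc by simp
  also have "\<dots> = wadd J (wadd J (wsum J f n) (f n)) (wadd J (wsum J g n) (g n))"
    using f g by (metis assoc ac3 add_in)
  finally show ?case by simp
qed

lemma wsum_mono: "(\<And>j. j < n \<Longrightarrow> wle J (f j) (g j)) \<Longrightarrow> wle J (wsum J f n) (wsum J g n)"
  by (induction n) (auto intro: add_mono)

lemma wsum_smul: "0 \<le> l \<Longrightarrow> (\<And>j. j < n \<Longrightarrow> f j \<in> wcar J) \<Longrightarrow>
   wsum J (\<lambda>j. wsmul J l (f j)) n = wsmul J l (wsum J f n)"
  by (induction n) (auto simp: smul_add)

lemma wsum_append: "(\<And>j. j < n \<Longrightarrow> f j \<in> wcar J) \<Longrightarrow> (\<And>j. j < m \<Longrightarrow> g j \<in> wcar J) \<Longrightarrow>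
   wsum J (\<lambda>j. if j < n then f j else g (j - n)) (n + m) = wadd J (wsum J f n) (wsum J g m)"
proof (induction m)
  case 0
  have "wsum J (\<lambda>j. if j < n then f j else g (j - n)) n = wsum J f n" by (rule wsum_cong) simp
  thus ?case using 0 by simp
next
  case (Suc m)
  have "wsum J (\<lambda>j. if j < n then f j else g (j - n)) (n + Suc m)
     = wadd J (wadd J (wsum J f n) (wsum J g m)) (g m)" using Suc by simp
  also have "\<dots> = wadd J (wsum J f n) (wsum J g (Suc m))" using Suc.prems by (simp add: assoc)
  finally show ?case .
qed

lemma wsum_zero: "wsum J (\<lambda>j. wzero J) n = wzero J" by (induction n) auto

lemma wsum_eq_zero: "(\<And>j. j < n \<Longrightarrow> f j \<in> wcar J) \<Longrightarrow> wsum J f n = wzero J \<Longrightarrow> j < n \<Longrightarrow> f j = wzero J"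
proof (induction n)
  case 0 thus ?case by simp
next
  case (Suc n)
  have a: "wsum J f n \<in> wcar J" "f n \<in> wcar J" using Suc.prems(1) by (intro wsum_in, simp) (simp add: Suc.prems(1))
  have s: "wadd J (wsum J f n) (f n) = wzero J" using Suc.prems(2) by simp
  have 1: "wsum J f n = wzero J" using sum_zero[OF a s] .
  have 2: "f n = wzero J" using sum_zero[OF a(2,1)] s comm[OF a] by simp
  show ?case
  proof (cases "j < n")
    case True thus ?thesis using Suc.IH[OF _ 1] Suc.prems(1) by simp
  next
    case False hence "j = n" using Suc.prems(3) by simp
    thus ?thesis using 2 by simp
  qed
qed

lemma le_zero: "wle J x (wzero J) \<Longrightarrow> x = wzero J"
  using zero_le le_antisym le_in by blast

lemma rdp_n: "wle J x (wsum J s m) \<Longrightarrow> (\<And>j. j < m \<Longrightarrow> s j \<in> wcar J) \<Longrightarrow>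
  \<exists>y. (\<forall>j<m. y j \<in> wcar J \<and> wle J (y j) (s j)) \<and> wsum J y m = x"
proof (induction m arbitrary: x)
  case 0
  hence "x = wzero J" using le_zero by simp
  thus ?case by simp
next
  case (Suc m)
  have sm: "wsum J s m \<in> wcar J" "s m \<in> wcar J" using Suc.prems(2) by (intro wsum_in, simp) (simp add: Suc.prems(2))
  have "wle J x (wadd J (wsum J s m) (s m))" using Suc.prems(1) by simp
  then obtain x1 x2 where x: "x1 \<in> wcar J" "x2 \<in> wcar J" "wadd J x1 x2 = x" "wle J x1 (wsum J s m)" "wle J x2 (s m)"
    using rdp2[OF _ sm] by blast
  obtain y where y: "\<forall>j<m. y j \<in> wcar J \<and> wle J (y j) (s j)" "wsum J y m = x1"
    using Suc.IH[OF x(4)] Suc.prems(2) by (metis less_SucI)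
  let ?y = "y(m := x2)"
  have "wsum J ?y m = wsum J y m" by (rule wsum_cong) simp
  hence "wsum J ?y (Suc m) = x" using y x by simp
  moreover have "\<forall>j<Suc m. ?y j \<in> wcar J \<and> wle J (?y j) (s j)"
  proof (intro allI impI)
    fix j assume "j < Suc m"
    thus "?y j \<in> wcar J \<and> wle J (?y j) (s j)" using y(1) x(2,5) by (cases "j < m") (auto simp: less_Suc_eq)
  qed
  ultimately show ?case by blast
qed

lemma w2m: "wle J (wadd J r1 r2) (wsum J s m) \<Longrightarrow> r1 \<in> wcar J \<Longrightarrow> r2 \<in> wcar J \<Longrightarrow> (\<And>j. j < m \<Longrightarrow> s j \<in> wcar J) \<Longrightarrow>
  \<exists>m1 m2. (\<forall>j<m. m1 j \<in> wcar J \<and> m2 j \<in> wcar J \<and> wle J (wadd J (m1 j) (m2 j)) (s j)) \<and>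
     wle J r1 (wsum J m1 m) \<and> wle J r2 (wsum J m2 m)"
proof (induction m arbitrary: r1 r2)
  case 0
  hence "wadd J r1 r2 = wzero J" using le_zero by simp
  hence "r1 = wzero J" "r2 = wzero J" using sum_zero[OF 0(2,3)] sum_zero[OF 0(3,2)] comm[OF 0(2,3)] by auto
  thus ?case by auto
next
  case (Suc m)
  have sm: "wsum J s m \<in> wcar J" "s m \<in> wcar J" using Suc.prems(4) by (intro wsum_in, simp) (simp add: Suc.prems(4))
  have "wle J (wadd J r1 r2) (wadd J (wsum J s m) (s m))" using Suc.prems(1) by simp
  then obtain a1 a2 b1 b2 where ab: "a1 \<in> wcar J" "a2 \<in> wcar J" "b1 \<in> wcar J" "b2 \<in> wcar J"
     "wadd J a1 b1 = wsum J s m" "wadd J a2 b2 = s m" "wle J r1 (wadd J a1 a2)" "wle J r2 (wadd J b1 b2)"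
    using w22[OF _ Suc.prems(2,3) sm] by blast
  obtain m1 m2 where mm: "\<forall>j<m. m1 j \<in> wcar J \<and> m2 j \<in> wcar J \<and> wle J (wadd J (m1 j) (m2 j)) (s j)"
      "wle J a1 (wsum J m1 m)" "wle J b1 (wsum J m2 m)"
    using Suc.IH[of a1 b1] ab(1,3,5) Suc.prems(4) sm(1) by (metis le_refl less_SucI)
  let ?m1 = "m1(m := a2)" and ?m2 = "m2(m := b2)"
  have "wsum J ?m1 m = wsum J m1 m" "wsum J ?m2 m = wsum J m2 m" by (rule wsum_cong, simp)+
  hence e1: "wsum J ?m1 (Suc m) = wadd J (wsum J m1 m) a2"
    and e2: "wsum J ?m2 (Suc m) = wadd J (wsum J m2 m) b2" by simp_all
  have "wle J r1 (wsum J ?m1 (Suc m))" unfolding e1 using le_trans[OF ab(7) add_mono1[OF mm(2) ab(2)]] .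
  moreover have "wle J r2 (wsum J ?m2 (Suc m))" unfolding e2 using le_trans[OF ab(8) add_mono1[OF mm(3) ab(4)]] .
  moreover have "\<forall>j<Suc m. ?m1 j \<in> wcar J \<and> ?m2 j \<in> wcar J \<and> wle J (wadd J (?m1 j) (?m2 j)) (s j)"
  proof (intro allI impI)
    fix j assume "j < Suc m"
    thus "?m1 j \<in> wcar J \<and> ?m2 j \<in> wcar J \<and> wle J (wadd J (?m1 j) (?m2 j)) (s j)"
      using mm(1) ab(2,4,6) sm by (cases "j < m") (auto simp: less_Suc_eq)
  qed
  ultimately show ?case by blast
qed

lemma wn2: "wle J (wsum J u n) (wadd J v w) \<Longrightarrow> (\<And>j. j < n \<Longrightarrow> u j \<in> wcar J) \<Longrightarrow> v \<in> wcar J \<Longrightarrow> w \<in> wcar J \<Longrightarrow>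
  \<exists>c d. (\<forall>j<n. c j \<in> wcar J \<and> d j \<in> wcar J \<and> wle J (u j) (wadd J (c j) (d j))) \<and>
     wle J (wsum J c n) v \<and> wle J (wsum J d n) w"
proof (induction n arbitrary: v w)
  case 0
  thus ?case using zero_le by (intro exI[of _ "\<lambda>j. wzero J"]) auto
next
  case (Suc n)
  have vw: "v \<in> wcar J" "w \<in> wcar J" using Suc.prems(3,4) .
  have un: "wsum J u n \<in> wcar J" "u n \<in> wcar J" using Suc.prems(2) by (intro wsum_in, simp) (simp add: Suc.prems(2))
  have "wle J (wadd J (wsum J u n) (u n)) (wadd J v w)" using Suc.prems(1) by simp
  then obtain a1 a2 b1 b2 where ab: "a1 \<in> wcar J" "a2 \<in> wcar J" "b1 \<in> wcar J" "b2 \<in> wcar J"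
     "wadd J a1 b1 = v" "wadd J a2 b2 = w" "wle J (wsum J u n) (wadd J a1 a2)" "wle J (u n) (wadd J b1 b2)"
    using w22[OF _ un vw] by blast
  obtain c d where cd: "\<forall>j<n. c j \<in> wcar J \<and> d j \<in> wcar J \<and> wle J (u j) (wadd J (c j) (d j))"
      "wle J (wsum J c n) a1" "wle J (wsum J d n) a2"
    using Suc.IH[OF ab(7) _ ab(1,2)] Suc.prems(2) by (metis less_SucI)
  let ?c = "c(n := b1)" and ?d = "d(n := b2)"
  have "wsum J ?c n = wsum J c n" "wsum J ?d n = wsum J d n" by (rule wsum_cong, simp)+
  hence e1: "wsum J ?c (Suc n) = wadd J (wsum J c n) b1"
    and e2: "wsum J ?d (Suc n) = wadd J (wsum J d n) b2" by simp_all
  have "wle J (wsum J ?c (Suc n)) v" unfolding e1 using add_mono1[OF cd(2) ab(3)] ab(5) by simp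
  moreover have "wle J (wsum J ?d (Suc n)) w" unfolding e2 using add_mono1[OF cd(3) ab(4)] ab(6) by simp
  moreover have "\<forall>j<Suc n. ?c j \<in> wcar J \<and> ?d j \<in> wcar J \<and> wle J (u j) (wadd J (?c j) (?d j))"
  proof (intro allI impI)
    fix j assume "j < Suc n"
    thus "?c j \<in> wcar J \<and> ?d j \<in> wcar J \<and> wle J (u j) (wadd J (?c j) (?d j))"
      using cd(1) ab(3,4,8) by (cases "j < n") (auto simp: less_Suc_eq)
  qed
  ultimately show ?case by blast
qed

end


context cwj begin

definition mc where "mc a p = (SOME b. b \<in> wcar J \<and> wadd J a b = p \<and> (\<forall>z\<in>wcar J. wle J (wadd J a z) p \<longrightarrow> wle J z b))"

lemma mc: "wle J a p \<Longrightarrow> mc a p \<in> wcar J \<and> wadd J a (mc a p) = p \<and> (\<forall>z\<in>wcar J. wle J (wadd J a z) p \<longrightarrow> wle J z (mc a p))"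
  unfolding mc_def by (rule someI_ex, rule maxc)

lemma mc_unique: "b \<in> wcar J \<Longrightarrow> wadd J a b = p \<Longrightarrow> (\<forall>z\<in>wcar J. wle J (wadd J a z) p \<longrightarrow> wle J z b) \<Longrightarrow> a \<in> wcar J \<Longrightarrow> mc a p = b"
proof -
  assume b: "b \<in> wcar J" "wadd J a b = p" "\<forall>z\<in>wcar J. wle J (wadd J a z) p \<longrightarrow> wle J z b" and a: "a \<in> wcar J"
  have ap: "wle J a p" using b a le_add by blast
  have p: "p \<in> wcar J" using b a by auto
  note m = mc[OF ap]
  have "wle J (mc a p) b" using m b(3) p by auto
  moreover have "wle J b (mc a p)" using m b p by auto
  ultimately show ?thesis using le_antisym by blast
qed

lemma gsup_empty: "gsup {} = wzero J"
  using gsup_eq[of "{}" "wzero J"] zero_le unfolding is_lub_def by auto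

lemma smul_gsup: "0 < l \<Longrightarrow> A \<subseteq> wcar J \<Longrightarrow> wsmul J l (gsup A) = gsup (wsmul J l ` A)"
proof -
  assume l: "0 < l" and A: "A \<subseteq> wcar J"
  have lA: "wsmul J l ` A \<subseteq> wcar J" using A l by auto
  have 1: "wle J (gsup (wsmul J l ` A)) (wsmul J l (gsup A))"
  proof (rule gsup_le[OF lA])
    show "wsmul J l (gsup A) \<in> wcar J" using l gsup_in[OF A] by simp
  next
    fix a assume "a \<in> wsmul J l ` A"
    then obtain b where "b \<in> A" "a = wsmul J l b" by blast
    thus "wle J a (wsmul J l (gsup A))" using smul_mono l le_gsup[OF A] by simp
  qed
  have "wle J (gsup A) (wsmul J (1/l) (gsup (wsmul J l ` A)))"
  proof (rule gsup_le[OF A])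
    show "wsmul J (1/l) (gsup (wsmul J l ` A)) \<in> wcar J" using l gsup_in[OF lA] by simp
  next
    fix a assume a: "a \<in> A"
    have "wle J (wsmul J (1/l) (wsmul J l a)) (wsmul J (1/l) (gsup (wsmul J l ` A)))"
      using l a lA by (intro smul_mono le_gsup) auto
    thus "wle J a (wsmul J (1/l) (gsup (wsmul J l ` A)))" using smul_inv l a A by auto
  qed
  hence "wle J (wsmul J l (gsup A)) (wsmul J l (wsmul J (1/l) (gsup (wsmul J l ` A))))"
    using l by (intro smul_mono) auto
  moreover have "wsmul J l (wsmul J (1/l) (gsup (wsmul J l ` A))) = gsup (wsmul J l ` A)"
    using l gsup_in[OF lA] by (simp add: smul_smul)
  ultimately show ?thesis using 1 le_antisym by simp
qed

lemma smul_pos_nonzero: "0 < l \<Longrightarrow> v \<in> wcar J \<Longrightarrow> v \<noteq> wzero J \<Longrightarrow> wsmul J l v \<noteq> wzero J"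
  by (metis smul_inv smul_zero less_eq_real_def zero_le_divide_1_iff)

lemma add_top: "x \<in> wcar J \<Longrightarrow> wadd J x topJ = topJ"
  using top_eq le_add2 by simp

lemma smul_top: "0 < l \<Longrightarrow> wsmul J l topJ = topJ"
proof -
  assume l: "0 < l"
  have "wle J (wsmul J l (wsmul J (1/l) topJ)) (wsmul J l topJ)"
    using l le_top by (intro smul_mono) auto
  hence "wle J topJ (wsmul J l topJ)" using l by (simp add: smul_smul)
  thus ?thesis using top_eq l by simp
qed

end

locale two = c1: cwj J1 + c2: cwj J2
  for J1 :: "('a, 'm) pwstr_scheme" and J2 :: "('b, 'n) pwstr_scheme"
begin

lemma Lin_car: "M \<in> wcar (Lin J1 J2) \<longleftrightarrow> linear_map J1 J2 M \<and> (\<forall>v. v \<notin> wcar J1 \<longrightarrow> M v = undefined)"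
  by (simp add: Lin_def)
lemma Lin_add: "wadd (Lin J1 J2) L M = (\<lambda>v. if v \<in> wcar J1 then wadd J2 (L v) (M v) else undefined)"
  by (simp add: Lin_def)
lemma Lin_zero: "wzero (Lin J1 J2) = (\<lambda>v. if v \<in> wcar J1 then wzero J2 else undefined)"
  by (simp add: Lin_def)
lemma Lin_smul: "wsmul (Lin J1 J2) c L = (\<lambda>v. if v \<in> wcar J1 then wsmul J2 c (L v) else undefined)"
  by (simp add: Lin_def)

lemma lin_in: "linear_map J1 J2 L \<Longrightarrow> v \<in> wcar J1 \<Longrightarrow> L v \<in> wcar J2"
  unfolding linear_map_def by blast

lemma lin_eq: "linear_map J1 J2 L \<Longrightarrow> 0 \<le> l1 \<Longrightarrow> 0 \<le> l2 \<Longrightarrow> v1 \<in> wcar J1 \<Longrightarrow> v2 \<in> wcar J1 \<Longrightarrow>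
   L (wadd J1 (wsmul J1 l1 v1) (wsmul J1 l2 v2)) = wadd J2 (wsmul J2 l1 (L v1)) (wsmul J2 l2 (L v2))"
  unfolding linear_map_def by blast

lemma lin_add: "linear_map J1 J2 L \<Longrightarrow> v \<in> wcar J1 \<Longrightarrow> w \<in> wcar J1 \<Longrightarrow> L (wadd J1 v w) = wadd J2 (L v) (L w)"
  using lin_eq[of L 1 1 v w] lin_in by simp

lemma lin_smul: "linear_map J1 J2 L \<Longrightarrow> 0 \<le> l \<Longrightarrow> v \<in> wcar J1 \<Longrightarrow> L (wsmul J1 l v) = wsmul J2 l (L v)"
  using lin_eq[of L l 0 v v] lin_in by simp

lemma lin_zero: "linear_map J1 J2 L \<Longrightarrow> L (wzero J1) = wzero J2"
  using lin_smul[of L 0 "wzero J1"] c1.zero_in lin_in by simp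

lemma lin_mono: "linear_map J1 J2 L \<Longrightarrow> wle J1 v w \<Longrightarrow> wle J2 (L v) (L w)"
  unfolding wle_def using lin_add lin_in by metis

lemma lin_wsum: "linear_map J1 J2 L \<Longrightarrow> (\<And>j. j < n \<Longrightarrow> f j \<in> wcar J1) \<Longrightarrow>
  L (wsum J1 f n) = wsum J2 (\<lambda>j. L (f j)) n"
proof (induction n)
  case 0 thus ?case using lin_zero by simp
next
  case (Suc n)
  have "L (wsum J1 f (Suc n)) = wadd J2 (L (wsum J1 f n)) (L (f n))"
    using lin_add[OF Suc.prems(1)] Suc.prems(2) by (simp add: c1.wsum_in)
  thus ?case using Suc by simp
qed

lemma mk_lin:
  assumes car: "\<And>v. v \<in> wcar J1 \<Longrightarrow> f v \<in> wcar J2"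
    and add: "\<And>v w. v \<in> wcar J1 \<Longrightarrow> w \<in> wcar J1 \<Longrightarrow> f (wadd J1 v w) = wadd J2 (f v) (f w)"
    and hom: "\<And>l v. 0 < l \<Longrightarrow> v \<in> wcar J1 \<Longrightarrow> f (wsmul J1 l v) = wsmul J2 l (f v)"
    and z: "f (wzero J1) = wzero J2"
  shows "linear_map J1 J2 f"
proof -
  have h: "f (wsmul J1 l v) = wsmul J2 l (f v)" if "0 \<le> l" "v \<in> wcar J1" for l v
  proof (cases "l = 0")
    case True thus ?thesis using z that car by simp
  next
    case False thus ?thesis using hom that by simp
  qed
  show ?thesis unfolding linear_map_def using car add h by simp
qed

lemma Lin_ext: "L \<in> wcar (Lin J1 J2) \<Longrightarrow> M \<in> wcar (Lin J1 J2) \<Longrightarrow> (\<And>v. v \<in> wcar J1 \<Longrightarrow> L v = M v) \<Longrightarrow> L = M"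
  unfolding Lin_car by (metis ext)

lemma LinD: "L \<in> wcar (Lin J1 J2) \<Longrightarrow> linear_map J1 J2 L" unfolding Lin_car by blast

lemma LinI: "linear_map J1 J2 L \<Longrightarrow> (\<And>v. v \<notin> wcar J1 \<Longrightarrow> L v = undefined) \<Longrightarrow> L \<in> wcar (Lin J1 J2)"
  unfolding Lin_car by blast

lemma Lin_le_iff:
  assumes L: "L \<in> wcar (Lin J1 J2)" and M: "M \<in> wcar (Lin J1 J2)"
  shows "wle (Lin J1 J2) L M \<longleftrightarrow> (\<forall>v\<in>wcar J1. wle J2 (L v) (M v))"
proof
  assume "wle (Lin J1 J2) L M"
  then obtain N where N: "N \<in> wcar (Lin J1 J2)" "wadd (Lin J1 J2) L N = M" unfolding wle_def by blast
  show "\<forall>v\<in>wcar J1. wle J2 (L v) (M v)"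
  proof
    fix v assume v: "v \<in> wcar J1"
    have "M v = wadd J2 (L v) (N v)" using N(2)[symmetric] v by (simp add: Lin_add)
    thus "wle J2 (L v) (M v)" using c2.le_add lin_in LinD L N v by simp
  qed
next
  assume pw: "\<forall>v\<in>wcar J1. wle J2 (L v) (M v)"
  define N where "N = (\<lambda>v. if v \<in> wcar J1 then c2.mc (L v) (M v) else undefined)"
  have lL: "linear_map J1 J2 L" and lM: "linear_map J1 J2 M" using L M LinD by auto
  have Nv: "N v \<in> wcar J2 \<and> wadd J2 (L v) (N v) = M v \<and> (\<forall>z\<in>wcar J2. wle J2 (wadd J2 (L v) z) (M v) \<longrightarrow> wle J2 z (N v))"
    if "v \<in> wcar J1" for v using c2.mc[OF pw[rule_format, OF that]] that unfolding N_def by simp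
  have lN: "linear_map J1 J2 N"
  proof (rule mk_lin)
    fix v assume "v \<in> wcar J1" thus "N v \<in> wcar J2" using Nv by blast
  next
    fix v w assume v: "v \<in> wcar J1" and w: "w \<in> wcar J1"
    have vw: "wadd J1 v w \<in> wcar J1" using v w by simp
    have Lv: "L v \<in> wcar J2" "L w \<in> wcar J2" "M v \<in> wcar J2" "M w \<in> wcar J2"
      using lin_in lL lM v w by auto
    have e1: "wadd J2 (L (wadd J1 v w)) (wadd J2 (N v) (N w)) = M (wadd J1 v w)"
    proof -
      have "wadd J2 (L (wadd J1 v w)) (wadd J2 (N v) (N w)) = wadd J2 (wadd J2 (L v) (L w)) (wadd J2 (N v) (N w))"
        using lin_add lL v w by simp
      also have "\<dots> = wadd J2 (wadd J2 (L v) (N v)) (wadd J2 (L w) (N w))"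
        using Lv Nv v w by (metis c2.ac3 c2.add_in c2.assoc)
      also have "\<dots> = M (wadd J1 v w)" using Nv v w lin_add lM by simp
      finally show ?thesis .
    qed
    have z: "wadd J2 (N v) (N w) \<in> wcar J2" using Nv v w by simp
    have "M (wadd J1 v w) \<in> wcar J2" using lin_in lM vw by blast
    hence "wle J2 (wadd J2 (L (wadd J1 v w)) (wadd J2 (N v) (N w))) (M (wadd J1 v w))"
      using e1 c2.le_refl by simp
    hence "wle J2 (wadd J2 (N v) (N w)) (N (wadd J1 v w))"
      using Nv[OF vw] z by blast
    moreover have "wle J2 (N (wadd J1 v w)) (wadd J2 (N v) (N w))"
    proof (rule c2.walpha[of "L v" "M v" "L w" "M w"])
      show "wle J2 (L v) (M v)" "wle J2 (L w) (M w)" using pw v w by auto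
      show "N v \<in> wcar J2" "wadd J2 (L v) (N v) = M v" "\<forall>z\<in>wcar J2. wle J2 (wadd J2 (L v) z) (M v) \<longrightarrow> wle J2 z (N v)"
        using Nv v by auto
      show "N w \<in> wcar J2" "wadd J2 (L w) (N w) = M w" "\<forall>z\<in>wcar J2. wle J2 (wadd J2 (L w) z) (M w) \<longrightarrow> wle J2 z (N w)"
        using Nv w by auto
      show "N (wadd J1 v w) \<in> wcar J2" using Nv vw by blast
      have "wadd J2 (wadd J2 (L v) (L w)) (N (wadd J1 v w)) = M (wadd J1 v w)"
        using Nv[OF vw] lin_add lL v w by simp
      thus "wle J2 (wadd J2 (wadd J2 (L v) (L w)) (N (wadd J1 v w))) (wadd J2 (M v) (M w))"
        using lin_add[OF lM v w] c2.le_refl[OF lin_in[OF lM vw]] by simp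
    qed
    ultimately show "N (wadd J1 v w) = wadd J2 (N v) (N w)" using c2.le_antisym by blast
  next
    fix l :: real and v assume l: "0 < l" and v: "v \<in> wcar J1"
    have lv: "wsmul J1 l v \<in> wcar J1" using l v by simp
    have Lv: "L v \<in> wcar J2" "M v \<in> wcar J2" using lin_in lL lM v by auto
    have "c2.mc (L (wsmul J1 l v)) (M (wsmul J1 l v)) = wsmul J2 l (N v)"
    proof (rule c2.mc_unique)
      show "wsmul J2 l (N v) \<in> wcar J2" using Nv v l by simp
      show "L (wsmul J1 l v) \<in> wcar J2" using lin_in lL lv by blast
      show "wadd J2 (L (wsmul J1 l v)) (wsmul J2 l (N v)) = M (wsmul J1 l v)"
        using lin_smul lL lM l v Nv c2.smul_add[of l "L v" "N v"] Lv by simp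
      show "\<forall>z\<in>wcar J2. wle J2 (wadd J2 (L (wsmul J1 l v)) z) (M (wsmul J1 l v)) \<longrightarrow> wle J2 z (wsmul J2 l (N v))"
      proof (intro ballI impI)
        fix z assume z: "z \<in> wcar J2" and h: "wle J2 (wadd J2 (L (wsmul J1 l v)) z) (M (wsmul J1 l v))"
        have "wle J2 (wsmul J2 (1/l) (wadd J2 (L (wsmul J1 l v)) z)) (wsmul J2 (1/l) (M (wsmul J1 l v)))"
          using h l by (intro c2.smul_mono) auto
        moreover have "L (wsmul J1 l v) = wsmul J2 l (L v)" "M (wsmul J1 l v) = wsmul J2 l (M v)"
          using lin_smul lL lM l v by auto
        moreover have "wsmul J2 (1/l) (wadd J2 (wsmul J2 l (L v)) z) = wadd J2 (L v) (wsmul J2 (1/l) z)"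
          using l z Lv by (simp add: c2.smul_add c2.smul_smul)
        moreover have "wsmul J2 (1/l) (wsmul J2 l (M v)) = M v" using l Lv by (simp add: c2.smul_smul)
        ultimately have "wle J2 (wadd J2 (L v) (wsmul J2 (1/l) z)) (M v)" by simp
        hence "wle J2 (wsmul J2 (1/l) z) (N v)" using Nv v z l by simp
        hence "wle J2 (wsmul J2 l (wsmul J2 (1/l) z)) (wsmul J2 l (N v))" using l by (intro c2.smul_mono) auto
        thus "wle J2 z (wsmul J2 l (N v))" using l z by (simp add: c2.smul_smul)
      qed
    qed
    thus "N (wsmul J1 l v) = wsmul J2 l (N v)" using lv unfolding N_def using v by simp
  next
    have n0: "N (wzero J1) \<in> wcar J2" and e: "wadd J2 (L (wzero J1)) (N (wzero J1)) = M (wzero J1)"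
      using Nv[OF c1.zero_in] by auto
    hence "wadd J2 (wzero J2) (N (wzero J1)) = wzero J2" using lin_zero[OF lL] lin_zero[OF lM] by simp
    thus "N (wzero J1) = wzero J2" using c2.add0l[OF n0] by simp
  qed
  have NL: "N \<in> wcar (Lin J1 J2)" using lN unfolding Lin_car N_def by simp
  have "wadd (Lin J1 J2) L N = M"
  proof (rule ext)
    fix v show "wadd (Lin J1 J2) L N v = M v"
      using Nv M unfolding Lin_add Lin_car by auto
  qed
  thus "wle (Lin J1 J2) L M" unfolding wle_def using L M NL by blast
qed

lemma Lin_antisym: "L \<in> wcar (Lin J1 J2) \<Longrightarrow> M \<in> wcar (Lin J1 J2) \<Longrightarrow>
  wle (Lin J1 J2) L M \<Longrightarrow> wle (Lin J1 J2) M L \<Longrightarrow> L = M"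
  using Lin_le_iff Lin_ext c2.le_antisym by metis

end


context two begin

lemma D_iff: "d \<in> decomp_sums J1 J2 I Lf v \<longleftrightarrow> (\<exists>n idx vs. n \<ge> 1 \<and> (\<forall>j<n. idx j \<in> I) \<and> (\<forall>j<n. vs j \<in> wcar J1)
   \<and> wsum J1 vs n = v \<and> d = wsum J2 (\<lambda>j. Lf (idx j) (vs j)) n)"
  unfolding decomp_sums_def by blast

lemma Lf_lin: "Lf ` I \<subseteq> wcar (Lin J1 J2) \<Longrightarrow> i \<in> I \<Longrightarrow> linear_map J1 J2 (Lf i)"
  using LinD by blast

lemma D_sub: "Lf ` I \<subseteq> wcar (Lin J1 J2) \<Longrightarrow> decomp_sums J1 J2 I Lf v \<subseteq> wcar J2"
proof
  fix d assume LI: "Lf ` I \<subseteq> wcar (Lin J1 J2)" and "d \<in> decomp_sums J1 J2 I Lf v"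
  then obtain n idx vs where h: "(\<forall>j<n. idx j \<in> I)" "(\<forall>j<n. vs j \<in> wcar J1)" "d = wsum J2 (\<lambda>j. Lf (idx j) (vs j)) n"
    unfolding D_iff by blast
  show "d \<in> wcar J2" unfolding h(3) using h(1,2) lin_in Lf_lin[OF LI] by (intro c2.wsum_in) blast
qed

lemma D_single: "Lf ` I \<subseteq> wcar (Lin J1 J2) \<Longrightarrow> i \<in> I \<Longrightarrow> v \<in> wcar J1 \<Longrightarrow> Lf i v \<in> decomp_sums J1 J2 I Lf v"
  unfolding D_iff by (intro exI[of _ 1] exI[of _ "\<lambda>j. i"] exI[of _ "\<lambda>j. v"]) (simp add: lin_in Lf_lin)

lemma D_app:
  assumes LI: "Lf ` I \<subseteq> wcar (Lin J1 J2)"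
    and d1: "d1 \<in> decomp_sums J1 J2 I Lf v" and d2: "d2 \<in> decomp_sums J1 J2 I Lf w"
  shows "wadd J2 d1 d2 \<in> decomp_sums J1 J2 I Lf (wadd J1 v w)"
proof -
  obtain n idx vs where h: "n \<ge> 1" "(\<forall>j<n. idx j \<in> I)" "(\<forall>j<n. vs j \<in> wcar J1)" "wsum J1 vs n = v"
      "d1 = wsum J2 (\<lambda>j. Lf (idx j) (vs j)) n"
    using d1 unfolding D_iff by blast
  obtain m idx' ws where g: "m \<ge> 1" "(\<forall>j<m. idx' j \<in> I)" "(\<forall>j<m. ws j \<in> wcar J1)" "wsum J1 ws m = w"
      "d2 = wsum J2 (\<lambda>j. Lf (idx' j) (ws j)) m"
    using d2 unfolding D_iff by blast
  define IX where "IX = (\<lambda>j. if j < n then idx j else idx' (j - n))"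
  define VS where "VS = (\<lambda>j. if j < n then vs j else ws (j - n))"
  have 1: "wsum J1 VS (n + m) = wadd J1 v w" unfolding VS_def using c1.wsum_append[of n vs m ws] h g by simp
  have "wsum J2 (\<lambda>j. Lf (IX j) (VS j)) (n + m) = wsum J2 (\<lambda>j. if j < n then Lf (idx j) (vs j) else Lf (idx' (j-n)) (ws (j-n))) (n + m)"
    by (rule c2.wsum_cong) (simp add: IX_def VS_def)
  also have "\<dots> = wadd J2 d1 d2" using c2.wsum_append[of n "\<lambda>j. Lf (idx j) (vs j)" m "\<lambda>j. Lf (idx' j) (ws j)"] h g
      lin_in Lf_lin[OF LI] by simp
  finally have 2: "wsum J2 (\<lambda>j. Lf (IX j) (VS j)) (n + m) = wadd J2 d1 d2" .
  have 3: "\<forall>j<n+m. IX j \<in> I" "\<forall>j<n+m. VS j \<in> wcar J1" using h g unfolding IX_def VS_def by auto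
  show ?thesis unfolding D_iff using 1 2 3 h(1)
    by (intro exI[of _ "n+m"] exI[of _ IX] exI[of _ VS]) auto
qed

lemma D_scale:
  assumes LI: "Lf ` I \<subseteq> wcar (Lin J1 J2)" and l: "0 < l" and d: "d \<in> decomp_sums J1 J2 I Lf v"
  shows "wsmul J2 l d \<in> decomp_sums J1 J2 I Lf (wsmul J1 l v)"
proof -
  obtain n idx vs where h: "n \<ge> 1" "(\<forall>j<n. idx j \<in> I)" "(\<forall>j<n. vs j \<in> wcar J1)" "wsum J1 vs n = v"
      "d = wsum J2 (\<lambda>j. Lf (idx j) (vs j)) n"
    using d unfolding D_iff by blast
  have 1: "wsum J1 (\<lambda>j. wsmul J1 l (vs j)) n = wsmul J1 l v" using c1.wsum_smul l h by simp
  have "wsum J2 (\<lambda>j. Lf (idx j) (wsmul J1 l (vs j))) n = wsum J2 (\<lambda>j. wsmul J2 l (Lf (idx j) (vs j))) n"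
    by (rule c2.wsum_cong) (use lin_smul Lf_lin[OF LI] h l in auto)
  also have "\<dots> = wsmul J2 l d" using c2.wsum_smul l h lin_in Lf_lin[OF LI] by simp
  finally show ?thesis unfolding D_iff using 1 h l
    by (intro exI[of _ n] exI[of _ idx] exI[of _ "\<lambda>j. wsmul J1 l (vs j)"]) auto
qed

lemma D_scale_eq:
  assumes LI: "Lf ` I \<subseteq> wcar (Lin J1 J2)" and l: "0 < l" and v: "v \<in> wcar J1"
  shows "decomp_sums J1 J2 I Lf (wsmul J1 l v) = wsmul J2 l ` decomp_sums J1 J2 I Lf v"
proof (intro set_eqI iffI)
  fix d assume d: "d \<in> decomp_sums J1 J2 I Lf (wsmul J1 l v)"
  have "wsmul J2 (1/l) d \<in> decomp_sums J1 J2 I Lf (wsmul J1 (1/l) (wsmul J1 l v))"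
    using D_scale[OF LI _ d] l by simp
  moreover have "wsmul J1 (1/l) (wsmul J1 l v) = v" using c1.smul_inv l v by simp
  moreover have "d = wsmul J2 l (wsmul J2 (1/l) d)"
  proof -
    have "d \<in> wcar J2" using d D_sub[OF LI] by blast
    thus ?thesis using l by (simp add: c2.smul_smul)
  qed
  ultimately show "d \<in> wsmul J2 l ` decomp_sums J1 J2 I Lf v" by auto
next
  fix d assume "d \<in> wsmul J2 l ` decomp_sums J1 J2 I Lf v"
  thus "d \<in> decomp_sums J1 J2 I Lf (wsmul J1 l v)" using D_scale[OF LI l] by auto
qed

lemma D_zero:
  assumes LI: "Lf ` I \<subseteq> wcar (Lin J1 J2)" and d: "d \<in> decomp_sums J1 J2 I Lf (wzero J1)"
  shows "d = wzero J2"
proof -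
  obtain n idx vs where h: "n \<ge> 1" "(\<forall>j<n. idx j \<in> I)" "(\<forall>j<n. vs j \<in> wcar J1)" "wsum J1 vs n = wzero J1"
      "d = wsum J2 (\<lambda>j. Lf (idx j) (vs j)) n"
    using d unfolding D_iff by blast
  have "vs j = wzero J1" if "j < n" for j using c1.wsum_eq_zero[of n vs] h that by blast
  hence "d = wsum J2 (\<lambda>j. wzero J2) n" unfolding h(5)
    by (intro c2.wsum_cong) (use lin_zero Lf_lin[OF LI] h in auto)
  thus ?thesis using c2.wsum_zero by simp
qed

lemma D_zero_eq: "Lf ` I \<subseteq> wcar (Lin J1 J2) \<Longrightarrow> I \<noteq> {} \<Longrightarrow> decomp_sums J1 J2 I Lf (wzero J1) = {wzero J2}"
proof -
  assume LI: "Lf ` I \<subseteq> wcar (Lin J1 J2)" and I: "I \<noteq> {}"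
  then obtain i where i: "i \<in> I" by blast
  have "Lf i (wzero J1) \<in> decomp_sums J1 J2 I Lf (wzero J1)" using D_single[OF LI i] by simp
  hence "wzero J2 \<in> decomp_sums J1 J2 I Lf (wzero J1)" using lin_zero Lf_lin[OF LI i] by simp
  thus ?thesis using D_zero[OF LI] by blast
qed

lemma D_empty: "decomp_sums J1 J2 {} Lf v = {}"
  unfolding decomp_sums_def by (auto dest: spec[of _ 0])

lemma D_ub:
  assumes LI: "Lf ` I \<subseteq> wcar (Lin J1 J2)" and N: "N \<in> wcar (Lin J1 J2)"
    and ub: "\<And>i v. i \<in> I \<Longrightarrow> v \<in> wcar J1 \<Longrightarrow> wle J2 (Lf i v) (N v)"
    and d: "d \<in> decomp_sums J1 J2 I Lf v"
  shows "wle J2 d (N v)"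
proof -
  obtain n idx vs where h: "n \<ge> 1" "(\<forall>j<n. idx j \<in> I)" "(\<forall>j<n. vs j \<in> wcar J1)" "wsum J1 vs n = v"
      "d = wsum J2 (\<lambda>j. Lf (idx j) (vs j)) n"
    using d unfolding D_iff by blast
  have "N (wsum J1 vs n) = wsum J2 (\<lambda>j. N (vs j)) n" by (rule lin_wsum[OF LinD[OF N]]) (use h in auto)
  hence "N v = wsum J2 (\<lambda>j. N (vs j)) n" using h(4) by simp
  thus ?thesis unfolding h(5) using ub h by (simp add: c2.wsum_mono)
qed

lemma D_lb:
  assumes LI: "Lf ` I \<subseteq> wcar (Lin J1 J2)" and N: "N \<in> wcar (Lin J1 J2)"
    and lb: "\<And>i v. i \<in> I \<Longrightarrow> v \<in> wcar J1 \<Longrightarrow> wle J2 (N v) (Lf i v)"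
    and d: "d \<in> decomp_sums J1 J2 I Lf v"
  shows "wle J2 (N v) d"
proof -
  obtain n idx vs where h: "n \<ge> 1" "(\<forall>j<n. idx j \<in> I)" "(\<forall>j<n. vs j \<in> wcar J1)" "wsum J1 vs n = v"
      "d = wsum J2 (\<lambda>j. Lf (idx j) (vs j)) n"
    using d unfolding D_iff by blast
  have "N (wsum J1 vs n) = wsum J2 (\<lambda>j. N (vs j)) n" by (rule lin_wsum[OF LinD[OF N]]) (use h in auto)
  hence "N v = wsum J2 (\<lambda>j. N (vs j)) n" using h(4) by simp
  thus ?thesis unfolding h(5) using lb h by (simp add: c2.wsum_mono)
qed

lemma D_super:
  assumes LI: "Lf ` I \<subseteq> wcar (Lin J1 J2)" and v: "v \<in> wcar J1" and w: "w \<in> wcar J1"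
    and d: "d \<in> decomp_sums J1 J2 I Lf (wadd J1 v w)"
  shows "\<exists>d1\<in>decomp_sums J1 J2 I Lf v. \<exists>d2\<in>decomp_sums J1 J2 I Lf w. wle J2 (wadd J2 d1 d2) d"
proof -
  obtain n idx u where h: "n \<ge> 1" "(\<forall>j<n. idx j \<in> I)" "(\<forall>j<n. u j \<in> wcar J1)" "wsum J1 u n = wadd J1 v w"
      "d = wsum J2 (\<lambda>j. Lf (idx j) (u j)) n"
    using d unfolding D_iff by blast
  have "wle J1 (wadd J1 v w) (wsum J1 u n)" using h(4) v w by simp
  then obtain m1 m2 where m: "\<forall>j<n. m1 j \<in> wcar J1 \<and> m2 j \<in> wcar J1 \<and> wle J1 (wadd J1 (m1 j) (m2 j)) (u j)"
      "wle J1 v (wsum J1 m1 n)" "wle J1 w (wsum J1 m2 n)"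
    using c1.w2m[OF _ v w] h(3) by blast
  obtain a where a: "\<forall>j<n. a j \<in> wcar J1 \<and> wle J1 (a j) (m1 j)" "wsum J1 a n = v"
    using c1.rdp_n[OF m(2)] m(1) by blast
  obtain b where b: "\<forall>j<n. b j \<in> wcar J1 \<and> wle J1 (b j) (m2 j)" "wsum J1 b n = w"
    using c1.rdp_n[OF m(3)] m(1) by blast
  define d1 where "d1 = wsum J2 (\<lambda>j. Lf (idx j) (a j)) n"
  define d2 where "d2 = wsum J2 (\<lambda>j. Lf (idx j) (b j)) n"
  have d1: "d1 \<in> decomp_sums J1 J2 I Lf v" unfolding D_iff d1_def using h a by blast
  have d2: "d2 \<in> decomp_sums J1 J2 I Lf w" unfolding D_iff d2_def using h b by blast
  have "wadd J2 d1 d2 = wsum J2 (\<lambda>j. wadd J2 (Lf (idx j) (a j)) (Lf (idx j) (b j))) n"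
    unfolding d1_def d2_def using c2.wsum_add[symmetric] h a b lin_in Lf_lin[OF LI] by simp
  also have "\<dots> = wsum J2 (\<lambda>j. Lf (idx j) (wadd J1 (a j) (b j))) n"
    by (rule c2.wsum_cong) (use h a b lin_add Lf_lin[OF LI] in auto)
  also have "wle J2 \<dots> d" unfolding h(5)
  proof (rule c2.wsum_mono)
    fix j assume j: "j < n"
    have "wle J1 (wadd J1 (a j) (b j)) (wadd J1 (m1 j) (m2 j))" using a b j by (simp add: c1.add_mono)
    hence "wle J1 (wadd J1 (a j) (b j)) (u j)" using m(1) j c1.le_trans by blast
    thus "wle J2 (Lf (idx j) (wadd J1 (a j) (b j))) (Lf (idx j) (u j))" using lin_mono Lf_lin[OF LI] h j by blast
  qed
  finally show ?thesis using d1 d2 by blast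
qed

lemma D_sub2:
  assumes LI: "Lf ` I \<subseteq> wcar (Lin J1 J2)" and v: "v \<in> wcar J1" and w: "w \<in> wcar J1"
    and d: "d \<in> decomp_sums J1 J2 I Lf (wadd J1 v w)"
  shows "\<exists>v' w' e1 e2. wle J1 v' v \<and> wle J1 w' w \<and> e1 \<in> decomp_sums J1 J2 I Lf v' \<and>
      e2 \<in> decomp_sums J1 J2 I Lf w' \<and> wle J2 d (wadd J2 e1 e2)"
proof -
  obtain n idx u where h: "n \<ge> 1" "(\<forall>j<n. idx j \<in> I)" "(\<forall>j<n. u j \<in> wcar J1)" "wsum J1 u n = wadd J1 v w"
      "d = wsum J2 (\<lambda>j. Lf (idx j) (u j)) n"
    using d unfolding D_iff by blast
  have "wle J1 (wsum J1 u n) (wadd J1 v w)" using h(4) v w by simp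
  then obtain c e where m: "\<forall>j<n. c j \<in> wcar J1 \<and> e j \<in> wcar J1 \<and> wle J1 (u j) (wadd J1 (c j) (e j))"
      "wle J1 (wsum J1 c n) v" "wle J1 (wsum J1 e n) w"
    using c1.wn2[OF _ _ v w] h(3) by blast
  define e1 where "e1 = wsum J2 (\<lambda>j. Lf (idx j) (c j)) n"
  define e2 where "e2 = wsum J2 (\<lambda>j. Lf (idx j) (e j)) n"
  have d1: "e1 \<in> decomp_sums J1 J2 I Lf (wsum J1 c n)" unfolding D_iff e1_def using h m by blast
  have d2: "e2 \<in> decomp_sums J1 J2 I Lf (wsum J1 e n)" unfolding D_iff e2_def using h m by blast
  have "wadd J2 e1 e2 = wsum J2 (\<lambda>j. wadd J2 (Lf (idx j) (c j)) (Lf (idx j) (e j))) n"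
    unfolding e1_def e2_def using c2.wsum_add[symmetric] h m lin_in Lf_lin[OF LI] by simp
  also have "\<dots> = wsum J2 (\<lambda>j. Lf (idx j) (wadd J1 (c j) (e j))) n"
    by (rule c2.wsum_cong) (use h m lin_add Lf_lin[OF LI] in auto)
  finally have eq: "wadd J2 e1 e2 = wsum J2 (\<lambda>j. Lf (idx j) (wadd J1 (c j) (e j))) n" .
  have "wle J2 d (wadd J2 e1 e2)" unfolding h(5) eq
  proof (rule c2.wsum_mono)
    fix j assume j: "j < n"
    thus "wle J2 (Lf (idx j) (u j)) (Lf (idx j) (wadd J1 (c j) (e j)))" using lin_mono Lf_lin[OF LI] h m by blast
  qed
  thus ?thesis using d1 d2 m by blast
qed

lemma D_mono:
  assumes LI: "Lf ` I \<subseteq> wcar (Lin J1 J2)" and I: "I \<noteq> {}" and vw: "wle J1 v w"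
    and d: "d \<in> decomp_sums J1 J2 I Lf v"
  shows "\<exists>d'\<in>decomp_sums J1 J2 I Lf w. wle J2 d d'"
proof -
  obtain t where t: "t \<in> wcar J1" "wadd J1 v t = w" using vw unfolding wle_def by blast
  obtain i where i: "i \<in> I" using I by blast
  have "wadd J2 d (Lf i t) \<in> decomp_sums J1 J2 I Lf w" using D_app[OF LI d D_single[OF LI i t(1)]] t by simp
  moreover have "wle J2 d (wadd J2 d (Lf i t))"
    using c2.le_add d D_sub[OF LI] lin_in Lf_lin[OF LI i] t by blast
  ultimately show ?thesis by blast
qed

end


context two begin

definition Ssup where "Ssup I Lf = (\<lambda>v. if v \<in> wcar J1 then c2.gsup (decomp_sums J1 J2 I Lf v) else undefined)"
definition Minf where "Minf I Lf = (\<lambda>v. if v \<in> wcar J1 then c2.ginf (decomp_sums J1 J2 I Lf v) else undefined)"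

lemma zero_map_lin: "linear_map J1 J2 (\<lambda>v. wzero J2)"
  by (rule mk_lin) auto

lemma zero_Lin: "wzero (Lin J1 J2) \<in> wcar (Lin J1 J2)"
proof -
  have "linear_map J1 J2 (\<lambda>v. if v \<in> wcar J1 then wzero J2 else undefined)"
    by (rule mk_lin) auto
  thus ?thesis unfolding Lin_zero by (intro LinI) auto
qed

lemma S_mono:
  assumes LI: "Lf ` I \<subseteq> wcar (Lin J1 J2)" and I: "I \<noteq> {}" and vw: "wle J1 v w"
  shows "wle J2 (c2.gsup (decomp_sums J1 J2 I Lf v)) (c2.gsup (decomp_sums J1 J2 I Lf w))"
proof (rule c2.gsup_le[OF D_sub[OF LI]])
  show "c2.gsup (decomp_sums J1 J2 I Lf w) \<in> wcar J2" using c2.gsup_in[OF D_sub[OF LI]] .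
next
  fix d assume "d \<in> decomp_sums J1 J2 I Lf v"
  then obtain d' where "d' \<in> decomp_sums J1 J2 I Lf w" "wle J2 d d'" using D_mono[OF LI I vw] by blast
  thus "wle J2 d (c2.gsup (decomp_sums J1 J2 I Lf w))" using c2.le_gsup[OF D_sub[OF LI]] c2.le_trans by blast
qed

lemma Ssup_Lin:
  assumes LI: "Lf ` I \<subseteq> wcar (Lin J1 J2)"
  shows "Ssup I Lf \<in> wcar (Lin J1 J2)"
proof (cases "I = {}")
  case True
  have "Ssup I Lf = wzero (Lin J1 J2)"
    unfolding Ssup_def Lin_zero True D_empty c2.gsup_empty by simp
  thus ?thesis using zero_Lin by simp
next
  case I: False
  let ?D = "decomp_sums J1 J2 I Lf"
  have Dsub: "?D v \<subseteq> wcar J2" for v using D_sub[OF LI] .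
  have Dne: "?D v \<noteq> {}" if "v \<in> wcar J1" for v using D_single[OF LI _ that] I by blast
  have lin: "linear_map J1 J2 (Ssup I Lf)"
  proof (rule mk_lin)
    fix v assume "v \<in> wcar J1" thus "Ssup I Lf v \<in> wcar J2" unfolding Ssup_def using c2.gsup_in[OF Dsub] by simp
  next
    fix v w assume v: "v \<in> wcar J1" and w: "w \<in> wcar J1"
    have vw: "wadd J1 v w \<in> wcar J1" using v w by simp
    have 1: "wle J2 (c2.gsup (?D (wadd J1 v w))) (wadd J2 (c2.gsup (?D v)) (c2.gsup (?D w)))"
    proof (rule c2.gsup_le[OF Dsub])
      show "wadd J2 (c2.gsup (?D v)) (c2.gsup (?D w)) \<in> wcar J2" using c2.gsup_in[OF Dsub] by simp
    next
      fix d assume "d \<in> ?D (wadd J1 v w)"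
      then obtain v' w' e1 e2 where h: "wle J1 v' v" "wle J1 w' w" "e1 \<in> ?D v'" "e2 \<in> ?D w'" "wle J2 d (wadd J2 e1 e2)"
        using D_sub2[OF LI v w] by blast
      have "wle J2 e1 (c2.gsup (?D v))" using c2.le_gsup[OF Dsub h(3)] S_mono[OF LI I h(1)] c2.le_trans by blast
      moreover have "wle J2 e2 (c2.gsup (?D w))" using c2.le_gsup[OF Dsub h(4)] S_mono[OF LI I h(2)] c2.le_trans by blast
      ultimately show "wle J2 d (wadd J2 (c2.gsup (?D v)) (c2.gsup (?D w)))"
        using h(5) c2.add_mono c2.le_trans by blast
    qed
    have 2: "wle J2 (wadd J2 (c2.gsup (?D v)) (c2.gsup (?D w))) (c2.gsup (?D (wadd J1 v w)))"
    proof -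
      have gv: "c2.gsup (?D v) \<in> wcar J2" using c2.gsup_in[OF Dsub] .
      have "wadd J2 (c2.gsup (?D v)) (c2.gsup (?D w)) = c2.gsup (wadd J2 (c2.gsup (?D v)) ` ?D w)"
        using c2.sup_dist[OF Dsub Dne[OF w] gv] .
      also have "wle J2 \<dots> (c2.gsup (?D (wadd J1 v w)))"
      proof (rule c2.gsup_le)
        show "wadd J2 (c2.gsup (?D v)) ` ?D w \<subseteq> wcar J2" using gv Dsub[of w] c2.add_in by blast
        show "c2.gsup (?D (wadd J1 v w)) \<in> wcar J2" using c2.gsup_in[OF Dsub] .
      next
        fix a assume "a \<in> wadd J2 (c2.gsup (?D v)) ` ?D w"
        then obtain d2 where d2: "d2 \<in> ?D w" "a = wadd J2 (c2.gsup (?D v)) d2" by blast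
        have d2in: "d2 \<in> wcar J2" using d2 Dsub by blast
        have "a = wadd J2 d2 (c2.gsup (?D v))" using d2 gv d2in c2.comm by simp
        also have "\<dots> = c2.gsup (wadd J2 d2 ` ?D v)" using c2.sup_dist[OF Dsub Dne[OF v] d2in] .
        also have "wle J2 \<dots> (c2.gsup (?D (wadd J1 v w)))"
        proof (rule c2.gsup_le)
          show "wadd J2 d2 ` ?D v \<subseteq> wcar J2" using d2in Dsub[of v] c2.add_in by blast
          show "c2.gsup (?D (wadd J1 v w)) \<in> wcar J2" using c2.gsup_in[OF Dsub] .
        next
          fix b assume "b \<in> wadd J2 d2 ` ?D v"
          then obtain d1 where d1: "d1 \<in> ?D v" "b = wadd J2 d2 d1" by blast
          have "b = wadd J2 d1 d2" using d1 d2in Dsub c2.comm by auto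
          hence "b \<in> ?D (wadd J1 v w)" using D_app[OF LI d1(1) d2(1)] by simp
          thus "wle J2 b (c2.gsup (?D (wadd J1 v w)))" using c2.le_gsup[OF Dsub] by blast
        qed
        finally show "wle J2 a (c2.gsup (?D (wadd J1 v w)))" .
      qed
      finally show ?thesis .
    qed
    show "Ssup I Lf (wadd J1 v w) = wadd J2 (Ssup I Lf v) (Ssup I Lf w)"
      unfolding Ssup_def using v w vw 1 2 c2.le_antisym by simp
  next
    fix l :: real and v assume l: "0 < l" and v: "v \<in> wcar J1"
    show "Ssup I Lf (wsmul J1 l v) = wsmul J2 l (Ssup I Lf v)"
      unfolding Ssup_def using l v D_scale_eq[OF LI l v] c2.smul_gsup[OF l Dsub] by simp
  next
    have "c2.gsup {wzero J2} = wzero J2" by (rule c2.gsup_eq) (auto simp: is_lub_def c2.le_refl)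
    thus "Ssup I Lf (wzero J1) = wzero J2" unfolding Ssup_def using D_zero_eq[OF LI I] by simp
  qed
  thus ?thesis by (rule LinI) (simp add: Ssup_def)
qed

lemma Ssup_lub:
  assumes LI: "Lf ` I \<subseteq> wcar (Lin J1 J2)"
  shows "is_lub (Lin J1 J2) (Lf ` I) (Ssup I Lf)"
proof -
  let ?D = "decomp_sums J1 J2 I Lf"
  have Dsub: "?D v \<subseteq> wcar J2" for v using D_sub[OF LI] .
  have S: "Ssup I Lf \<in> wcar (Lin J1 J2)" using Ssup_Lin[OF LI] .
  have 1: "\<forall>a\<in>Lf ` I. wle (Lin J1 J2) a (Ssup I Lf)"
  proof
    fix a assume "a \<in> Lf ` I"
    then obtain i where i: "i \<in> I" "a = Lf i" by blast
    have "\<forall>v\<in>wcar J1. wle J2 (Lf i v) (Ssup I Lf v)"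
      unfolding Ssup_def using c2.le_gsup[OF Dsub D_single[OF LI i(1)]] by simp
    thus "wle (Lin J1 J2) a (Ssup I Lf)" using Lin_le_iff LI S i by auto
  qed
  have 2: "\<forall>u\<in>wcar (Lin J1 J2). (\<forall>a\<in>Lf ` I. wle (Lin J1 J2) a u) \<longrightarrow> wle (Lin J1 J2) (Ssup I Lf) u"
  proof (intro ballI impI)
    fix u assume u: "u \<in> wcar (Lin J1 J2)" and h: "\<forall>a\<in>Lf ` I. wle (Lin J1 J2) a u"
    have ub: "wle J2 (Lf i v) (u v)" if "i \<in> I" "v \<in> wcar J1" for i v
    proof -
      have "wle (Lin J1 J2) (Lf i) u" "Lf i \<in> wcar (Lin J1 J2)" using h LI that by auto
      thus ?thesis using Lin_le_iff[of "Lf i" u] u that by blast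
    qed
    have "\<forall>v\<in>wcar J1. wle J2 (Ssup I Lf v) (u v)"
    proof
      fix v assume v: "v \<in> wcar J1"
      show "wle J2 (Ssup I Lf v) (u v)" unfolding Ssup_def using v
        by (simp, intro c2.gsup_le[OF Dsub]) (auto intro: D_ub[OF LI u ub] lin_in LinD[OF u])
    qed
    thus "wle (Lin J1 J2) (Ssup I Lf) u" using Lin_le_iff S u by blast
  qed
  show ?thesis unfolding is_lub_def using S 1 2 by blast
qed

lemma Minf_Lin:
  assumes LI: "Lf ` I \<subseteq> wcar (Lin J1 J2)" and I: "I \<noteq> {}"
  shows "Minf I Lf \<in> wcar (Lin J1 J2)"
proof -
  let ?D = "decomp_sums J1 J2 I Lf"
  have Dsub: "?D v \<subseteq> wcar J2" for v using D_sub[OF LI] .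
  have lin: "linear_map J1 J2 (Minf I Lf)"
  proof (rule mk_lin)
    fix v assume "v \<in> wcar J1" thus "Minf I Lf v \<in> wcar J2" unfolding Minf_def using c2.ginf_in[OF Dsub] by simp
  next
    fix v w assume v: "v \<in> wcar J1" and w: "w \<in> wcar J1"
    have vw: "wadd J1 v w \<in> wcar J1" using v w by simp
    have 1: "wle J2 (wadd J2 (c2.ginf (?D v)) (c2.ginf (?D w))) (c2.ginf (?D (wadd J1 v w)))"
    proof (rule c2.le_ginf[OF Dsub])
      show "wadd J2 (c2.ginf (?D v)) (c2.ginf (?D w)) \<in> wcar J2" using c2.ginf_in[OF Dsub] by simp
    next
      fix d assume "d \<in> ?D (wadd J1 v w)"
      then obtain d1 d2 where h: "d1 \<in> ?D v" "d2 \<in> ?D w" "wle J2 (wadd J2 d1 d2) d"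
        using D_super[OF LI v w] by blast
      have "wle J2 (wadd J2 (c2.ginf (?D v)) (c2.ginf (?D w))) (wadd J2 d1 d2)"
        using c2.ginf_le[OF Dsub h(1)] c2.ginf_le[OF Dsub h(2)] c2.add_mono by blast
      thus "wle J2 (wadd J2 (c2.ginf (?D v)) (c2.ginf (?D w))) d" using h(3) c2.le_trans by blast
    qed
    have 2: "wle J2 (c2.ginf (?D (wadd J1 v w))) (wadd J2 (c2.ginf (?D v)) (c2.ginf (?D w)))"
    proof -
      have gv: "c2.ginf (?D v) \<in> wcar J2" using c2.ginf_in[OF Dsub] .
      have "wle J2 (c2.ginf (?D (wadd J1 v w))) (c2.ginf (wadd J2 (c2.ginf (?D v)) ` ?D w))"
      proof (rule c2.le_ginf)
        show "wadd J2 (c2.ginf (?D v)) ` ?D w \<subseteq> wcar J2" using gv Dsub[of w] c2.add_in by blast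
        show "c2.ginf (?D (wadd J1 v w)) \<in> wcar J2" using c2.ginf_in[OF Dsub] .
      next
        fix a assume "a \<in> wadd J2 (c2.ginf (?D v)) ` ?D w"
        then obtain d2 where d2: "d2 \<in> ?D w" "a = wadd J2 (c2.ginf (?D v)) d2" by blast
        have d2in: "d2 \<in> wcar J2" using d2 Dsub by blast
        have "a = wadd J2 d2 (c2.ginf (?D v))" using d2 gv d2in c2.comm by simp
        also have "\<dots> = c2.ginf (wadd J2 d2 ` ?D v)" using c2.ginf_shift[OF Dsub d2in] by simp
        finally have a: "a = c2.ginf (wadd J2 d2 ` ?D v)" .
        have "wle J2 (c2.ginf (?D (wadd J1 v w))) (c2.ginf (wadd J2 d2 ` ?D v))"
        proof (rule c2.le_ginf)
          show "wadd J2 d2 ` ?D v \<subseteq> wcar J2" using d2in Dsub[of v] c2.add_in by blast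
          show "c2.ginf (?D (wadd J1 v w)) \<in> wcar J2" using c2.ginf_in[OF Dsub] .
        next
          fix b assume "b \<in> wadd J2 d2 ` ?D v"
          then obtain d1 where d1: "d1 \<in> ?D v" "b = wadd J2 d2 d1" by blast
          have "b = wadd J2 d1 d2" using d1 d2in Dsub c2.comm by auto
          hence "b \<in> ?D (wadd J1 v w)" using D_app[OF LI d1(1) d2(1)] by simp
          thus "wle J2 (c2.ginf (?D (wadd J1 v w))) b" using c2.ginf_le[OF Dsub] by blast
        qed
        thus "wle J2 (c2.ginf (?D (wadd J1 v w))) a" using a by simp
      qed
      also have "c2.ginf (wadd J2 (c2.ginf (?D v)) ` ?D w) = wadd J2 (c2.ginf (?D v)) (c2.ginf (?D w))"
        using c2.ginf_shift[OF Dsub gv] .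
      finally show ?thesis .
    qed
    show "Minf I Lf (wadd J1 v w) = wadd J2 (Minf I Lf v) (Minf I Lf w)"
      unfolding Minf_def using v w vw 1 2 c2.le_antisym by simp
  next
    fix l :: real and v assume l: "0 < l" and v: "v \<in> wcar J1"
    show "Minf I Lf (wsmul J1 l v) = wsmul J2 l (Minf I Lf v)"
      unfolding Minf_def using l v D_scale_eq[OF LI l v] c2.smul_ginf[OF l Dsub] by simp
  next
    have "c2.ginf {wzero J2} = wzero J2" by (rule c2.ginf_eq) (auto simp: is_glb_def c2.le_refl)
    thus "Minf I Lf (wzero J1) = wzero J2" unfolding Minf_def using D_zero_eq[OF LI I] by simp
  qed
  thus ?thesis by (rule LinI) (simp add: Minf_def)
qed

lemma Minf_glb:
  assumes LI: "Lf ` I \<subseteq> wcar (Lin J1 J2)" and I: "I \<noteq> {}"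
  shows "is_glb (Lin J1 J2) (Lf ` I) (Minf I Lf)"
proof -
  let ?D = "decomp_sums J1 J2 I Lf"
  have Dsub: "?D v \<subseteq> wcar J2" for v using D_sub[OF LI] .
  have S: "Minf I Lf \<in> wcar (Lin J1 J2)" using Minf_Lin[OF LI I] .
  have 1: "\<forall>a\<in>Lf ` I. wle (Lin J1 J2) (Minf I Lf) a"
  proof
    fix a assume "a \<in> Lf ` I"
    then obtain i where i: "i \<in> I" "a = Lf i" by blast
    have "\<forall>v\<in>wcar J1. wle J2 (Minf I Lf v) (Lf i v)"
      unfolding Minf_def using c2.ginf_le[OF Dsub D_single[OF LI i(1)]] by simp
    thus "wle (Lin J1 J2) (Minf I Lf) a" using Lin_le_iff LI S i by auto
  qed
  have 2: "\<forall>u\<in>wcar (Lin J1 J2). (\<forall>a\<in>Lf ` I. wle (Lin J1 J2) u a) \<longrightarrow> wle (Lin J1 J2) u (Minf I Lf)"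
  proof (intro ballI impI)
    fix u assume u: "u \<in> wcar (Lin J1 J2)" and h: "\<forall>a\<in>Lf ` I. wle (Lin J1 J2) u a"
    have lb: "wle J2 (u v) (Lf i v)" if "i \<in> I" "v \<in> wcar J1" for i v
    proof -
      have "wle (Lin J1 J2) u (Lf i)" "Lf i \<in> wcar (Lin J1 J2)" using h LI that by auto
      thus ?thesis using Lin_le_iff[of u "Lf i"] u that by blast
    qed
    have "\<forall>v\<in>wcar J1. wle J2 (u v) (Minf I Lf v)"
    proof
      fix v assume v: "v \<in> wcar J1"
      show "wle J2 (u v) (Minf I Lf v)" unfolding Minf_def using v
        by (simp, intro c2.le_ginf[OF Dsub]) (auto intro: D_lb[OF LI u lb] lin_in LinD[OF u])
    qed
    thus "wle (Lin J1 J2) u (Minf I Lf)" using Lin_le_iff S u by blast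
  qed
  show ?thesis unfolding is_glb_def using S 1 2 by blast
qed

end


context two begin

definition Tm where "Tm = (\<lambda>v. if v \<in> wcar J1 then (if v = wzero J1 then wzero J2 else c2.topJ) else undefined)"

lemma Tm_Lin: "Tm \<in> wcar (Lin J1 J2)"
proof -
  have "linear_map J1 J2 Tm"
  proof (rule mk_lin)
    fix v assume "v \<in> wcar J1" thus "Tm v \<in> wcar J2" unfolding Tm_def by simp
  next
    fix v w assume v: "v \<in> wcar J1" and w: "w \<in> wcar J1"
    have Tw: "Tm w \<in> wcar J2" "Tm v \<in> wcar J2" using v w unfolding Tm_def by auto
    show "Tm (wadd J1 v w) = wadd J2 (Tm v) (Tm w)"
    proof (cases "v = wzero J1")
      case True thus ?thesis using w Tw unfolding Tm_def by simp
    next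
      case vn: False
      show ?thesis
      proof (cases "w = wzero J1")
        case True thus ?thesis using v Tw unfolding Tm_def by simp
      next
        case wn: False
        have "wadd J1 v w \<noteq> wzero J1" using c1.sum_zero[OF v w] vn by blast
        thus ?thesis using v w vn wn c2.add_top unfolding Tm_def by simp
      qed
    qed
  next
    fix l :: real and v assume l: "0 < l" and v: "v \<in> wcar J1"
    show "Tm (wsmul J1 l v) = wsmul J2 l (Tm v)"
    proof (cases "v = wzero J1")
      case True thus ?thesis using l unfolding Tm_def by simp
    next
      case False
      hence "wsmul J1 l v \<noteq> wzero J1" using c1.smul_pos_nonzero l v by blast
      thus ?thesis using False l v c2.smul_top unfolding Tm_def by simp
    qed
  qed (simp add: Tm_def)
  thus ?thesis by (rule LinI) (simp add: Tm_def)
qed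

lemma le_Tm: "N \<in> wcar (Lin J1 J2) \<Longrightarrow> wle (Lin J1 J2) N Tm"
  using Lin_le_iff[OF _ Tm_Lin] lin_zero[OF LinD] c2.le_top lin_in[OF LinD]
  unfolding Tm_def by (simp add: c2.le_refl)

lemma Tm_absorb: "N \<in> wcar (Lin J1 J2) \<Longrightarrow> wadd (Lin J1 J2) N Tm = Tm"
proof (rule ext)
  fix v assume N: "N \<in> wcar (Lin J1 J2)"
  show "wadd (Lin J1 J2) N Tm v = Tm v"
    unfolding Lin_add using lin_zero[OF LinD[OF N]] c2.add_top lin_in[OF LinD[OF N]]
    unfolding Tm_def by auto
qed

lemma Tm_glb: "is_glb (Lin J1 J2) {} Tm"
  unfolding is_glb_def using Tm_Lin le_Tm by blast

lemma Lin_le_in: "wle (Lin J1 J2) L M \<Longrightarrow> L \<in> wcar (Lin J1 J2) \<and> M \<in> wcar (Lin J1 J2)"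
  unfolding wle_def by blast

lemma Lin_glb_unique: "is_glb (Lin J1 J2) A i \<Longrightarrow> is_glb (Lin J1 J2) A i' \<Longrightarrow> i = i'"
  unfolding is_glb_def by (meson Lin_antisym)
lemma Lin_lub_unique: "is_lub (Lin J1 J2) A i \<Longrightarrow> is_lub (Lin J1 J2) A i' \<Longrightarrow> i = i'"
  unfolding is_lub_def by (meson Lin_antisym)

lemma Lin_add_in: "L \<in> wcar (Lin J1 J2) \<Longrightarrow> M \<in> wcar (Lin J1 J2) \<Longrightarrow> wadd (Lin J1 J2) L M \<in> wcar (Lin J1 J2)"
proof -
  assume L: "L \<in> wcar (Lin J1 J2)" and M: "M \<in> wcar (Lin J1 J2)"
  note lL = LinD[OF L] and lM = LinD[OF M]
  have "linear_map J1 J2 (wadd (Lin J1 J2) L M)"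
  proof (rule mk_lin)
    fix v assume "v \<in> wcar J1" thus "wadd (Lin J1 J2) L M v \<in> wcar J2"
      unfolding Lin_add using lin_in lL lM by simp
  next
    fix v w assume v: "v \<in> wcar J1" and w: "w \<in> wcar J1"
    have i: "L v \<in> wcar J2" "L w \<in> wcar J2" "M v \<in> wcar J2" "M w \<in> wcar J2" using lin_in lL lM v w by auto
    have "wadd J2 (wadd J2 (L v) (L w)) (wadd J2 (M v) (M w)) = wadd J2 (wadd J2 (L v) (M v)) (wadd J2 (L w) (M w))"
      using i by (metis c2.ac3 c2.add_in c2.assoc)
    thus "wadd (Lin J1 J2) L M (wadd J1 v w) = wadd J2 (wadd (Lin J1 J2) L M v) (wadd (Lin J1 J2) L M w)"
      unfolding Lin_add using v w lin_add lL lM by simp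
  next
    fix l :: real and v assume l: "0 < l" and v: "v \<in> wcar J1"
    thus "wadd (Lin J1 J2) L M (wsmul J1 l v) = wsmul J2 l (wadd (Lin J1 J2) L M v)"
      unfolding Lin_add using lin_smul lL lM lin_in c2.smul_add by simp
  qed (simp add: Lin_add lin_zero lL lM)
  thus ?thesis by (rule LinI) (simp add: Lin_add)
qed

lemma Lin_smul_in: "0 \<le> c \<Longrightarrow> L \<in> wcar (Lin J1 J2) \<Longrightarrow> wsmul (Lin J1 J2) c L \<in> wcar (Lin J1 J2)"
proof -
  assume c: "0 \<le> c" and L: "L \<in> wcar (Lin J1 J2)"
  note lL = LinD[OF L]
  have "linear_map J1 J2 (wsmul (Lin J1 J2) c L)"
  proof (rule mk_lin)
    fix v assume "v \<in> wcar J1" thus "wsmul (Lin J1 J2) c L v \<in> wcar J2"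
      unfolding Lin_smul using lin_in lL c by simp
  next
    fix v w assume v: "v \<in> wcar J1" and w: "w \<in> wcar J1"
    thus "wsmul (Lin J1 J2) c L (wadd J1 v w) = wadd J2 (wsmul (Lin J1 J2) c L v) (wsmul (Lin J1 J2) c L w)"
      unfolding Lin_smul using lin_add[OF lL v w] lin_in[OF lL v] lin_in[OF lL w] c c2.smul_add by simp
  next
    fix l :: real and v assume l: "0 < l" and v: "v \<in> wcar J1"
    thus "wsmul (Lin J1 J2) c L (wsmul J1 l v) = wsmul J2 l (wsmul (Lin J1 J2) c L v)"
    proof -
      have Lv: "L v \<in> wcar J2" using lin_in[OF lL v] .
      have "L (wsmul J1 l v) = wsmul J2 l (L v)" using lin_smul[OF lL _ v] l by simp
      moreover have "wsmul J2 c (wsmul J2 l (L v)) = wsmul J2 l (wsmul J2 c (L v))"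
        using c l Lv by (simp add: c2.smul_smul mult.commute)
      ultimately show ?thesis unfolding Lin_smul using l v by simp
    qed
  qed (simp add: Lin_smul lin_zero lL c)
  thus ?thesis by (rule LinI) (simp add: Lin_smul)
qed

lemma Lin_prewedge: "prewedge (Lin J1 J2)"
proof -
  let ?W = "Lin J1 J2"
  have in2: "L v \<in> wcar J2" if "L \<in> wcar ?W" "v \<in> wcar J1" for L v using lin_in LinD that by blast
  have ud: "L v = undefined" if "L \<in> wcar ?W" "v \<notin> wcar J1" for L v using that Lin_car by blast
  show ?thesis unfolding prewedge_def
  proof (intro conjI allI impI ballI)
    show "wzero ?W \<in> wcar ?W" using zero_Lin .
  next
    fix v w assume "v \<in> wcar ?W" "w \<in> wcar ?W" thus "wadd ?W v w \<in> wcar ?W" using Lin_add_in by blast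
  next
    fix l :: real and v assume "0 \<le> l" "v \<in> wcar ?W" thus "wsmul ?W l v \<in> wcar ?W" using Lin_smul_in by blast
  next
    fix v w assume "v \<in> wcar ?W" "w \<in> wcar ?W" thus "wadd ?W v w = wadd ?W w v"
      unfolding Lin_add using in2 c2.comm by (intro ext) auto
  next
    fix u v w assume "u \<in> wcar ?W" "v \<in> wcar ?W" "w \<in> wcar ?W"
    thus "wadd ?W (wadd ?W u v) w = wadd ?W u (wadd ?W v w)"
      unfolding Lin_add using in2 c2.assoc by (intro ext) auto
  next
    fix v assume v: "v \<in> wcar ?W" thus "wadd ?W v (wzero ?W) = v"
      unfolding Lin_add Lin_zero using in2 ud by (intro ext) (auto simp: ud[OF v])
  next
    fix l e :: real and v assume "0 \<le> l" "0 \<le> e" "v \<in> wcar ?W"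
    thus "wsmul ?W l (wsmul ?W e v) = wsmul ?W (l * e) v"
      unfolding Lin_smul using in2 c2.smul_smul by (intro ext) auto
  next
    fix v assume "v \<in> wcar ?W" thus "wsmul ?W 0 v = wzero ?W"
      unfolding Lin_smul Lin_zero using in2 by (intro ext) auto
  next
    fix v assume v: "v \<in> wcar ?W" thus "wsmul ?W 1 v = v"
      unfolding Lin_smul using in2 ud by (intro ext) (auto simp: ud[OF v])
  next
    fix l e :: real and v assume "0 \<le> l" "0 \<le> e" "v \<in> wcar ?W"
    thus "wsmul ?W (l + e) v = wadd ?W (wsmul ?W l v) (wsmul ?W e v)"
      unfolding Lin_smul Lin_add using in2 c2.smul_distr by (intro ext) auto
  next
    fix l :: real and v w assume "0 \<le> l" "v \<in> wcar ?W" "w \<in> wcar ?W"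
    thus "wsmul ?W l (wadd ?W v w) = wadd ?W (wsmul ?W l v) (wsmul ?W l w)"
      unfolding Lin_smul Lin_add using in2 c2.smul_add by (intro ext) auto
  qed
qed

end


context two begin

lemma Lin_wedge: "wedge (Lin J1 J2)"
proof -
  let ?W = "Lin J1 J2"
  have antis: "\<forall>v\<in>wcar ?W. \<forall>w\<in>wcar ?W. wle ?W v w \<and> wle ?W w v \<longrightarrow> v = w"
    using Lin_antisym by blast
  have lub: "is_lub ?W {wsmul ?W e L | e. 0 \<le> e \<and> e < 1} L" if L: "L \<in> wcar ?W" for L
  proof -
    have in2: "L v \<in> wcar J2" if "v \<in> wcar J1" for v using lin_in LinD L that by blast
    have 1: "\<forall>a\<in>{wsmul ?W e L | e. 0 \<le> e \<and> e < 1}. wle ?W a L"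
    proof
      fix a assume "a \<in> {wsmul ?W e L | e. 0 \<le> e \<and> e < 1}"
      then obtain e where e: "0 \<le> e" "e < 1" "a = wsmul ?W e L" by blast
      have aL: "a \<in> wcar ?W" using Lin_smul_in e L by simp
      have "\<forall>v\<in>wcar J1. wle J2 (a v) (L v)"
        using e in2 c2.smul_mono_scal[of e 1] unfolding Lin_smul by simp
      thus "wle ?W a L" using Lin_le_iff[OF aL L] by blast
    qed
    have 2: "\<forall>u\<in>wcar ?W. (\<forall>a\<in>{wsmul ?W e L | e. 0 \<le> e \<and> e < 1}. wle ?W a u) \<longrightarrow> wle ?W L u"
    proof (intro ballI impI)
      fix u assume u: "u \<in> wcar ?W" and h: "\<forall>a\<in>{wsmul ?W e L | e. 0 \<le> e \<and> e < 1}. wle ?W a u"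
      have "wle J2 (L v) (u v)" if v: "v \<in> wcar J1" for v
      proof (rule c2.is_lub_le[OF c2.wedge_lub[OF in2[OF v]]])
        show "u v \<in> wcar J2" using lin_in LinD u v by blast
        show "\<forall>a\<in>{wsmul J2 e (L v) |e. 0 \<le> e \<and> e < 1}. wle J2 a (u v)"
        proof
          fix a assume "a \<in> {wsmul J2 e (L v) |e. 0 \<le> e \<and> e < 1}"
          then obtain e where e: "0 \<le> e" "e < 1" "a = wsmul J2 e (L v)" by blast
          have "wle ?W (wsmul ?W e L) u" using h e by blast
          hence "wle J2 (wsmul ?W e L v) (u v)" using Lin_le_iff[OF Lin_smul_in[OF e(1) L] u] v by blast
          thus "wle J2 a (u v)" using e v unfolding Lin_smul by simp
        qed
      qed
      thus "wle ?W L u" using Lin_le_iff[OF L u] by blast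
    qed
    show ?thesis unfolding is_lub_def using L 1 2 by blast
  qed
  show ?thesis unfolding wedge_def using Lin_prewedge antis lub by blast
qed

lemma Lin_glb_ex: "A \<subseteq> wcar (Lin J1 J2) \<Longrightarrow> \<exists>i. is_glb (Lin J1 J2) A i"
proof (cases "A = {}")
  case True thus ?thesis using Tm_glb by blast
next
  case False
  assume A: "A \<subseteq> wcar (Lin J1 J2)"
  have "is_glb (Lin J1 J2) (id ` A) (Minf A id)" using Minf_glb[of id A] A False by simp
  thus ?thesis by auto
qed

lemma Lin_glb_shift:
  assumes A: "A \<subseteq> wcar (Lin J1 J2)" and L: "L \<in> wcar (Lin J1 J2)" and i: "is_glb (Lin J1 J2) A i"
  shows "is_glb (Lin J1 J2) (wadd (Lin J1 J2) L ` A) (wadd (Lin J1 J2) L i)"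
proof (cases "A = {}")
  case True
  have "i = Tm" using Lin_glb_unique i Tm_glb True by blast
  thus ?thesis using True Tm_absorb[OF L] Tm_glb by simp
next
  case ne: False
  let ?W = "Lin J1 J2"
  have iM: "i = Minf A id" using Lin_glb_unique i Minf_glb[of id A] A ne by simp
  have M: "Minf A id \<in> wcar ?W" using Minf_Lin[of id A] A ne by simp
  have LM: "wadd ?W L (Minf A id) \<in> wcar ?W" using Lin_add_in L M by blast
  have inL: "N v \<in> wcar J2" if "N \<in> wcar ?W" "v \<in> wcar J1" for N v using lin_in LinD that by blast
  have Mle: "wle ?W (Minf A id) a" if "a \<in> A" for a using Minf_glb[of id A] A ne that unfolding is_glb_def by auto
  have 1: "\<forall>b\<in>wadd ?W L ` A. wle ?W (wadd ?W L (Minf A id)) b"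
  proof
    fix b assume "b \<in> wadd ?W L ` A"
    then obtain a where a: "a \<in> A" "b = wadd ?W L a" by blast
    have aW: "a \<in> wcar ?W" using a A by blast
    have "\<forall>v\<in>wcar J1. wle J2 (Minf A id v) (a v)" using Lin_le_iff[OF M aW] Mle[OF a(1)] by blast
    hence "\<forall>v\<in>wcar J1. wle J2 (wadd ?W L (Minf A id) v) (b v)"
      unfolding a(2) Lin_add using c2.add_mono2 inL L by simp
    thus "wle ?W (wadd ?W L (Minf A id)) b" using Lin_le_iff[OF LM] Lin_add_in[OF L aW] a by blast
  qed
  have 2: "\<forall>u\<in>wcar ?W. (\<forall>b\<in>wadd ?W L ` A. wle ?W u b) \<longrightarrow> wle ?W u (wadd ?W L (Minf A id))"
  proof (intro ballI impI)
    fix u assume u: "u \<in> wcar ?W" and h: "\<forall>b\<in>wadd ?W L ` A. wle ?W u b"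
    have hp: "wle J2 (u v) (wadd J2 (L v) (a v))" if "a \<in> A" "v \<in> wcar J1" for a v
    proof -
      have aW: "a \<in> wcar ?W" using that A by blast
      have "wle ?W u (wadd ?W L a)" using h that by blast
      hence "wle J2 (u v) (wadd ?W L a v)" using Lin_le_iff[OF u Lin_add_in[OF L aW]] that by blast
      thus ?thesis using that unfolding Lin_add by simp
    qed
    let ?D = "decomp_sums J1 J2 A id"
    have Dsub: "?D v \<subseteq> wcar J2" for v using D_sub[of id A] A by simp
    have "wle J2 (u v) (wadd J2 (L v) (Minf A id v))" if v: "v \<in> wcar J1" for v
    proof -
      have "wadd J2 (L v) (Minf A id v) = c2.ginf (wadd J2 (L v) ` ?D v)"
        unfolding Minf_def using v c2.ginf_shift[OF Dsub inL[OF L v]] by simp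
      moreover have "wle J2 (u v) (c2.ginf (wadd J2 (L v) ` ?D v))"
      proof (rule c2.le_ginf)
        show "wadd J2 (L v) ` ?D v \<subseteq> wcar J2" using Dsub[of v] inL[OF L v] c2.add_in by blast
        show "u v \<in> wcar J2" using inL[OF u v] .
      next
        fix b assume "b \<in> wadd J2 (L v) ` ?D v"
        then obtain d where d: "d \<in> ?D v" "b = wadd J2 (L v) d" by blast
        obtain n idx vs where g: "n \<ge> 1" "(\<forall>j<n. idx j \<in> A)" "(\<forall>j<n. vs j \<in> wcar J1)" "wsum J1 vs n = v"
            "d = wsum J2 (\<lambda>j. id (idx j) (vs j)) n"
          using d(1) unfolding D_iff by blast
        have idxW: "idx j \<in> wcar ?W" if "j < n" for j using g A that by blast
        have Lv: "L v = wsum J2 (\<lambda>j. L (vs j)) n"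
        proof -
          have "L (wsum J1 vs n) = wsum J2 (\<lambda>j. L (vs j)) n" by (rule lin_wsum[OF LinD[OF L]]) (use g in auto)
          thus ?thesis using g(4) by simp
        qed
        have "b = wsum J2 (\<lambda>j. wadd J2 (L (vs j)) (idx j (vs j))) n"
          unfolding d(2) Lv g(5) using c2.wsum_add[of n "\<lambda>j. L (vs j)" "\<lambda>j. idx j (vs j)"] g inL L idxW by simp
        moreover have "u v = wsum J2 (\<lambda>j. u (vs j)) n"
        proof -
          have "u (wsum J1 vs n) = wsum J2 (\<lambda>j. u (vs j)) n" by (rule lin_wsum[OF LinD[OF u]]) (use g in auto)
          thus ?thesis using g(4) by simp
        qed
        moreover have "wle J2 (wsum J2 (\<lambda>j. u (vs j)) n) (wsum J2 (\<lambda>j. wadd J2 (L (vs j)) (idx j (vs j))) n)"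
          using hp g by (intro c2.wsum_mono) auto
        ultimately show "wle J2 (u v) b" by simp
      qed
      ultimately show ?thesis by simp
    qed
    hence "\<forall>v\<in>wcar J1. wle J2 (u v) (wadd ?W L (Minf A id) v)" unfolding Lin_add by simp
    thus "wle ?W u (wadd ?W L (Minf A id))" using Lin_le_iff[OF u LM] by blast
  qed
  show ?thesis unfolding iM is_glb_def using LM 1 2 by blast
qed

lemma Lin_cwj: "cone_with_joins (Lin J1 J2)"
proof -
  let ?W = "Lin J1 J2"
  have cone: "cone ?W" unfolding cone_def
  proof (intro conjI allI impI)
    show "wedge ?W" using Lin_wedge .
  next
    fix D assume "directed ?W D"
    hence D: "D \<subseteq> wcar ?W" unfolding directed_def by blast
    have "is_lub ?W (id ` D) (Ssup D id)" using Ssup_lub[of id D] D by simp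
    thus "\<exists>s. is_lub ?W D s" by auto
  qed
  show ?thesis unfolding cone_with_joins_def using cone Lin_glb_ex Lin_glb_shift by blast
qed

lemma pair_group:
  assumes L1: "L1 \<in> wcar (Lin J1 J2)" and L2: "L2 \<in> wcar (Lin J1 J2)"
  shows "(\<forall>j<n. idx j \<in> {L1, L2}) \<Longrightarrow> (\<forall>j<n. vs j \<in> wcar J1) \<Longrightarrow>
    \<exists>x1 x2. x1 \<in> wcar J1 \<and> x2 \<in> wcar J1 \<and> wadd J1 x1 x2 = wsum J1 vs n \<and>
       wadd J2 (L1 x1) (L2 x2) = wsum J2 (\<lambda>j. idx j (vs j)) n"
proof (induction n)
  case 0
  have "wadd J2 (L1 (wzero J1)) (L2 (wzero J1)) = wzero J2"
    using lin_zero[OF LinD[OF L1]] lin_zero[OF LinD[OF L2]] by simp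
  thus ?case by (intro exI[of _ "wzero J1"]) auto
next
  case (Suc n)
  obtain x1 x2 where x: "x1 \<in> wcar J1" "x2 \<in> wcar J1" "wadd J1 x1 x2 = wsum J1 vs n"
     "wadd J2 (L1 x1) (L2 x2) = wsum J2 (\<lambda>j. idx j (vs j)) n" using Suc by auto
  have vn: "vs n \<in> wcar J1" using Suc.prems by auto
  note l1 = LinD[OF L1] and l2 = LinD[OF L2]
  have i: "L1 x1 \<in> wcar J2" "L2 x2 \<in> wcar J2" "L1 (vs n) \<in> wcar J2" "L2 (vs n) \<in> wcar J2"
    using lin_in l1 l2 x vn by auto
  show ?case
  proof (cases "idx n = L1")
    case True
    have "wadd J1 (wadd J1 x1 (vs n)) x2 = wsum J1 vs (Suc n)" using x vn by (simp, metis c1.ac3 c1.assoc c1.comm)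
    moreover have "wadd J2 (L1 (wadd J1 x1 (vs n))) (L2 x2) = wsum J2 (\<lambda>j. idx j (vs j)) (Suc n)"
      using x vn True lin_add[OF l1 x(1) vn] i by (simp, metis c2.ac3 c2.assoc c2.comm)
    ultimately show ?thesis using x vn by (intro exI[of _ "wadd J1 x1 (vs n)"] exI[of _ x2]) simp
  next
    case False
    hence T: "idx n = L2" using Suc.prems by auto
    have "wadd J1 x1 (wadd J1 x2 (vs n)) = wsum J1 vs (Suc n)" using x(3)[symmetric] c1.assoc[OF x(1,2) vn] by simp
    moreover have "wadd J2 (L1 x1) (L2 (wadd J1 x2 (vs n))) = wsum J2 (\<lambda>j. idx j (vs j)) (Suc n)"
      using x(4)[symmetric] T lin_add[OF l2 x(2) vn] c2.assoc[OF i(1,2,4)] by simp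
    ultimately show ?thesis using x vn by (intro exI[of _ x1] exI[of _ "wadd J1 x2 (vs n)"]) simp
  qed
qed

lemma pair_decomp:
  assumes L1: "L1 \<in> wcar (Lin J1 J2)" and L2: "L2 \<in> wcar (Lin J1 J2)"
  shows "decomp_sums J1 J2 {L1, L2} id v =
    {wadd J2 (L1 v1) (L2 v2) | v1 v2. v1 \<in> wcar J1 \<and> v2 \<in> wcar J1 \<and> wadd J1 v1 v2 = v}"
proof (intro set_eqI iffI)
  fix d assume "d \<in> decomp_sums J1 J2 {L1, L2} id v"
  then obtain n idx vs where g: "n \<ge> 1" "(\<forall>j<n. idx j \<in> {L1, L2})" "(\<forall>j<n. vs j \<in> wcar J1)" "wsum J1 vs n = v"
      "d = wsum J2 (\<lambda>j. id (idx j) (vs j)) n"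
    unfolding D_iff by blast
  obtain x1 x2 where "x1 \<in> wcar J1" "x2 \<in> wcar J1" "wadd J1 x1 x2 = wsum J1 vs n"
      "wadd J2 (L1 x1) (L2 x2) = wsum J2 (\<lambda>j. idx j (vs j)) n"
    using pair_group[OF L1 L2 g(2,3)] by blast
  hence "d = wadd J2 (L1 x1) (L2 x2) \<and> x1 \<in> wcar J1 \<and> x2 \<in> wcar J1 \<and> wadd J1 x1 x2 = v"
    using g by simp
  thus "d \<in> {wadd J2 (L1 v1) (L2 v2) | v1 v2. v1 \<in> wcar J1 \<and> v2 \<in> wcar J1 \<and> wadd J1 v1 v2 = v}"
    by blast
next
  fix d assume "d \<in> {wadd J2 (L1 v1) (L2 v2) | v1 v2. v1 \<in> wcar J1 \<and> v2 \<in> wcar J1 \<and> wadd J1 v1 v2 = v}"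
  then obtain v1 v2 where h: "v1 \<in> wcar J1" "v2 \<in> wcar J1" "wadd J1 v1 v2 = v" "d = wadd J2 (L1 v1) (L2 v2)" by blast
  define idx where "idx = (\<lambda>j::nat. if j = 0 then L1 else L2)"
  define vs where "vs = (\<lambda>j::nat. if j = 0 then v1 else v2)"
  have i: "L1 v1 \<in> wcar J2" using lin_in LinD L1 h by blast
  have "wsum J1 vs 2 = v" using h by (simp add: numeral_2_eq_2 vs_def)
  moreover have "wsum J2 (\<lambda>j. id (idx j) (vs j)) 2 = d" using h i by (simp add: numeral_2_eq_2 vs_def idx_def)
  moreover have "\<forall>j<2. idx j \<in> {L1, L2}" "\<forall>j<2. vs j \<in> wcar J1" using h by (auto simp: idx_def vs_def)
  ultimately show "d \<in> decomp_sums J1 J2 {L1, L2} id v" unfolding D_iff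
    by (intro exI[of _ 2] exI[of _ idx] exI[of _ vs]) auto
qed

end


theorem mainTheorem11:
  fixes J1 :: "('a, 'm) pwstr_scheme" and J2 :: "('b, 'n) pwstr_scheme"
  assumes "cone_with_joins J1" and "cone_with_joins J2"
  shows "cone_with_joins (Lin J1 J2)
    \<and> (\<forall>(I :: 'i set) Lf. Lf ` I \<subseteq> wcar (Lin J1 J2) \<longrightarrow>
           (\<exists>S. is_lub (Lin J1 J2) (Lf ` I) S) \<and>
           (\<forall>S. is_lub (Lin J1 J2) (Lf ` I) S \<longrightarrow>
              (\<forall>v\<in>wcar J1. is_lub J2 (decomp_sums J1 J2 I Lf v) (S v))))
    \<and> (\<forall>(I :: 'i set) Lf. Lf ` I \<subseteq> wcar (Lin J1 J2) \<longrightarrow> I \<noteq> {} \<longrightarrow>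
           (\<exists>M. is_glb (Lin J1 J2) (Lf ` I) M) \<and>
           (\<forall>M. is_glb (Lin J1 J2) (Lf ` I) M \<longrightarrow>
              (\<forall>v\<in>wcar J1. is_glb J2 (decomp_sums J1 J2 I Lf v) (M v))))
    \<and> (\<forall>M. is_glb (Lin J1 J2) {} M \<longleftrightarrow>
           M \<in> wcar (Lin J1 J2) \<and> M (wzero J1) = wzero J2 \<and>
           (\<forall>v\<in>wcar J1. v \<noteq> wzero J1 \<longrightarrow> is_lub J2 (wcar J2) (M v)))
    \<and> (\<forall>S. is_lub (Lin J1 J2) {} S \<longleftrightarrow> S = wzero (Lin J1 J2))
    \<and> (\<forall>L1 L2 S. L1 \<in> wcar (Lin J1 J2) \<longrightarrow> L2 \<in> wcar (Lin J1 J2) \<longrightarrow>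
           is_lub (Lin J1 J2) {L1, L2} S \<longrightarrow>
           (\<forall>v\<in>wcar J1. is_lub J2 {wadd J2 (L1 v1) (L2 v2) | v1 v2.
                          v1 \<in> wcar J1 \<and> v2 \<in> wcar J1 \<and> wadd J1 v1 v2 = v} (S v)))
    \<and> (\<forall>L1 L2 M. L1 \<in> wcar (Lin J1 J2) \<longrightarrow> L2 \<in> wcar (Lin J1 J2) \<longrightarrow>
           is_glb (Lin J1 J2) {L1, L2} M \<longrightarrow>
           (\<forall>v\<in>wcar J1. is_glb J2 {wadd J2 (L1 v1) (L2 v2) | v1 v2.
                          v1 \<in> wcar J1 \<and> v2 \<in> wcar J1 \<and> wadd J1 v1 v2 = v} (M v)))
    \<and> (\<forall>L M. L \<in> wcar (Lin J1 J2) \<longrightarrow> M \<in> wcar (Lin J1 J2) \<longrightarrow>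
           (wle (Lin J1 J2) L M \<longleftrightarrow> (\<forall>v\<in>wcar J1. wle J2 (L v) (M v))))"
proof -
  interpret two J1 J2 by (intro two.intro cwj.intro assms)
  let ?W = "Lin J1 J2"
  have P2: "\<forall>(I :: 'i set) Lf. Lf ` I \<subseteq> wcar ?W \<longrightarrow>
           (\<exists>S. is_lub ?W (Lf ` I) S) \<and>
           (\<forall>S. is_lub ?W (Lf ` I) S \<longrightarrow>
              (\<forall>v\<in>wcar J1. is_lub J2 (decomp_sums J1 J2 I Lf v) (S v)))"
  proof (intro allI impI conjI)
    fix I :: "'i set" and Lf assume LI: "Lf ` I \<subseteq> wcar ?W"
    show "\<exists>S. is_lub ?W (Lf ` I) S" using Ssup_lub[OF LI] by blast
    fix S assume S: "is_lub ?W (Lf ` I) S"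
    have "S = Ssup I Lf" using Lin_lub_unique S Ssup_lub[OF LI] by blast
    thus "\<forall>v\<in>wcar J1. is_lub J2 (decomp_sums J1 J2 I Lf v) (S v)"
      unfolding Ssup_def using c2.gsup[OF D_sub[OF LI]] by simp
  qed
  have P3: "\<forall>(I :: 'i set) Lf. Lf ` I \<subseteq> wcar ?W \<longrightarrow> I \<noteq> {} \<longrightarrow>
           (\<exists>M. is_glb ?W (Lf ` I) M) \<and>
           (\<forall>M. is_glb ?W (Lf ` I) M \<longrightarrow>
              (\<forall>v\<in>wcar J1. is_glb J2 (decomp_sums J1 J2 I Lf v) (M v)))"
  proof (intro allI impI conjI)
    fix I :: "'i set" and Lf assume LI: "Lf ` I \<subseteq> wcar ?W" and I: "I \<noteq> {}"
    show "\<exists>M. is_glb ?W (Lf ` I) M" using Minf_glb[OF LI I] by blast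
    fix M assume M: "is_glb ?W (Lf ` I) M"
    have "M = Minf I Lf" using Lin_glb_unique M Minf_glb[OF LI I] by blast
    thus "\<forall>v\<in>wcar J1. is_glb J2 (decomp_sums J1 J2 I Lf v) (M v)"
      unfolding Minf_def using c2.ginf[OF D_sub[OF LI]] by simp
  qed
  have P4: "\<forall>M. is_glb ?W {} M \<longleftrightarrow>
           M \<in> wcar ?W \<and> M (wzero J1) = wzero J2 \<and>
           (\<forall>v\<in>wcar J1. v \<noteq> wzero J1 \<longrightarrow> is_lub J2 (wcar J2) (M v))"
  proof (intro allI iffI)
    fix M assume M: "is_glb ?W {} M"
    hence "M = Tm" using Lin_glb_unique Tm_glb by blast
    thus "M \<in> wcar ?W \<and> M (wzero J1) = wzero J2 \<and> (\<forall>v\<in>wcar J1. v \<noteq> wzero J1 \<longrightarrow> is_lub J2 (wcar J2) (M v))"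
      using Tm_Lin c2.top_lub unfolding Tm_def by simp
  next
    fix M assume M: "M \<in> wcar ?W \<and> M (wzero J1) = wzero J2 \<and> (\<forall>v\<in>wcar J1. v \<noteq> wzero J1 \<longrightarrow> is_lub J2 (wcar J2) (M v))"
    have "M = Tm"
    proof (rule Lin_ext[OF _ Tm_Lin])
      show "M \<in> wcar ?W" using M by blast
      fix v assume v: "v \<in> wcar J1"
      show "M v = Tm v"
      proof (cases "v = wzero J1")
        case True thus ?thesis using M unfolding Tm_def by simp
      next
        case False
        hence "is_lub J2 (wcar J2) (M v)" using M v by blast
        hence "M v = c2.topJ" using c2.lub_unique c2.top_lub by blast
        thus ?thesis using False v unfolding Tm_def by simp
      qed
    qed
    thus "is_glb ?W {} M" using Tm_glb by simp
  qed
  have zlub: "is_lub ?W {} (wzero ?W)"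
  proof -
    have "\<forall>u\<in>wcar ?W. wle ?W (wzero ?W) u"
    proof
      fix u assume u: "u \<in> wcar ?W"
      have "\<forall>v\<in>wcar J1. wle J2 (wzero ?W v) (u v)"
        unfolding Lin_zero using c2.zero_le lin_in LinD u by simp
      thus "wle ?W (wzero ?W) u" using Lin_le_iff[OF zero_Lin u] by blast
    qed
    thus ?thesis unfolding is_lub_def using zero_Lin by blast
  qed
  have P5: "\<forall>S. is_lub ?W {} S \<longleftrightarrow> S = wzero ?W"
    using zlub Lin_lub_unique by blast
  have P6: "\<forall>L1 L2 S. L1 \<in> wcar ?W \<longrightarrow> L2 \<in> wcar ?W \<longrightarrow>
           is_lub ?W {L1, L2} S \<longrightarrow>
           (\<forall>v\<in>wcar J1. is_lub J2 {wadd J2 (L1 v1) (L2 v2) | v1 v2.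
                          v1 \<in> wcar J1 \<and> v2 \<in> wcar J1 \<and> wadd J1 v1 v2 = v} (S v))"
  proof (intro allI impI ballI)
    fix L1 L2 S v assume L1: "L1 \<in> wcar ?W" and L2: "L2 \<in> wcar ?W" and S: "is_lub ?W {L1, L2} S"
      and v: "v \<in> wcar J1"
    have LI: "id ` {L1, L2} \<subseteq> wcar ?W" using L1 L2 by auto
    have "S = Ssup {L1, L2} id" using Lin_lub_unique S Ssup_lub[OF LI] by simp
    hence "is_lub J2 (decomp_sums J1 J2 {L1, L2} id v) (S v)"
      unfolding Ssup_def using c2.gsup[OF D_sub[OF LI]] v by simp
    thus "is_lub J2 {wadd J2 (L1 v1) (L2 v2) | v1 v2. v1 \<in> wcar J1 \<and> v2 \<in> wcar J1 \<and> wadd J1 v1 v2 = v} (S v)"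
      using pair_decomp[OF L1 L2] by simp
  qed
  have P7: "\<forall>L1 L2 M. L1 \<in> wcar ?W \<longrightarrow> L2 \<in> wcar ?W \<longrightarrow>
           is_glb ?W {L1, L2} M \<longrightarrow>
           (\<forall>v\<in>wcar J1. is_glb J2 {wadd J2 (L1 v1) (L2 v2) | v1 v2.
                          v1 \<in> wcar J1 \<and> v2 \<in> wcar J1 \<and> wadd J1 v1 v2 = v} (M v))"
  proof (intro allI impI ballI)
    fix L1 L2 M v assume L1: "L1 \<in> wcar ?W" and L2: "L2 \<in> wcar ?W" and M: "is_glb ?W {L1, L2} M"
      and v: "v \<in> wcar J1"
    have LI: "id ` {L1, L2} \<subseteq> wcar ?W" using L1 L2 by auto
    have ne: "{L1, L2} \<noteq> {}" by simp
    have "M = Minf {L1, L2} id" using Lin_glb_unique M Minf_glb[OF LI ne] by simp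
    hence "is_glb J2 (decomp_sums J1 J2 {L1, L2} id v) (M v)"
      unfolding Minf_def using c2.ginf[OF D_sub[OF LI]] v by simp
    thus "is_glb J2 {wadd J2 (L1 v1) (L2 v2) | v1 v2. v1 \<in> wcar J1 \<and> v2 \<in> wcar J1 \<and> wadd J1 v1 v2 = v} (M v)"
      using pair_decomp[OF L1 L2] by simp
  qed
  have P8: "\<forall>L M. L \<in> wcar ?W \<longrightarrow> M \<in> wcar ?W \<longrightarrow>
           (wle ?W L M \<longleftrightarrow> (\<forall>v\<in>wcar J1. wle J2 (L v) (M v)))"
    using Lin_le_iff by blast
  show ?thesis using Lin_cwj P2 P3 P4 P5 P6 P7 P8 by blast
qed


end
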